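(* Let $\mathcal{N}$ be an exact category and $k\ge 1$. Regarding a binary acyclic complex supported on $[0,k]$ as one supported on $[0,k+1]$ induces a well-defined homomorphism $L_1^k(\mathcal{N})\to K_1^{k+1}(\mathcal{N})$, and the homomorphism $i_k\colon L_1^k(\mathcal{N})\to L_1^{k+1}(\mathcal{N})$ (induced by the same assignment) factors as this homomorphism followed by the canonical epimorphism $K_1^{k+1}(\mathcal{N})\twoheadrightarrow L_1^{k+1}(\mathcal{N})$.
   Context: A binary acyclic complex $\mathbb{P}=(P_*,d,d')$ in $\mathcal{N}$ is a graded object $P_*$ of $\mathcal{N}$ supported on a finite subset of $[0,\infty)$, together with two degree $-1$ maps $d,d'$ (top and bottom differentials) such that both $\mathbb{P}^\top=(P_*,d)$ and $\mathbb{P}^\bot=(P_*,d')$ are acyclic chain complexes (each differential $P_n\to P_{n-1}$ factors as an admissible epimorphism $P_n\twoheadrightarrow J_{n-1}$ followed by an admissible monomorphism $J_{n-1}\rightarrowtail P_{n-1}$ with $J_n\rightarrowtail P_n\twoheadrightarrow J_{n-1}$ short exact for all $n$). It is diagonal if $d=d'$. Morphisms are degree-$0$ maps that are chain maps for both differentials; with degreewise short exact sequences these form an exact category. For $k\ge0$, $B_1^k(\mathcal{N})$ is the Grothendieck group of the exact category of binary acyclic complexes supported on $[0,k]$, and $K_1^k(\mathcal{N})$ is its quotient by classes of diagonal complexes. For isomorphisms $\alpha,\beta\colon P\to Q$, $\langle\alpha,\beta\rangle$ is the class of the binary complex with $P$ in degree $1$, $Q$ in degree $0$, top differential $\alpha$,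 bottom differential $\beta$. A binary ladder is $(\mathbb{P},\mathbb{Q},\sigma,\tau)$ with $\sigma\colon\mathbb{P}^\top\to\mathbb{Q}^\top$, $\tau\colon\mathbb{P}^\bot\to\mathbb{Q}^\bot$ chain isomorphisms. For $k\ge1$, $L_1^k(\mathcal{N})$ is the quotient of $K_1^k(\mathcal{N})$ by the relations $\mathbb{Q}-\mathbb{P}=\sum_{i=0}^k(-1)^i\langle\sigma_i,\tau_i\rangle$ for all binary ladders with $\mathbb{P},\mathbb{Q}$ supported on $[0,k]$, $P_i=Q_i$ for all $i$, and all $\sigma_i,\tau_i$ involutions. *)

theory Defs
  imports "HOL-Algebra.Free_Abelian_Groups" "HOL-Algebra.Coset" "HOL-Algebra.Generated_Groups"
begin

record ('o, 'm) excat =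
  Ob :: "'o set"
  Mor :: "'m set"
  dom :: "'m \<Rightarrow> 'o"
  cod :: "'m \<Rightarrow> 'o"
  comp :: "'m \<Rightarrow> 'm \<Rightarrow> 'm"   (* comp g f = g after f *)
  idm :: "'o \<Rightarrow> 'm"
  madd :: "'m \<Rightarrow> 'm \<Rightarrow> 'm"
  zmor :: "'o \<Rightarrow> 'o \<Rightarrow> 'm"
  confl :: "('m \<times> 'm) set"      (* conflations (i, p) *)

definition homs :: "('o,'m) excat \<Rightarrow> 'o \<Rightarrow> 'o \<Rightarrow> 'm set" where
  "homs C X Y = {f \<in> Mor C. dom C f = X \<and> cod C f = Y}"

definition is_category :: "('o,'m) excat \<Rightarrow> bool" where
  "is_category C \<longleftrightarrow>
     (\<forall>f\<in>Mor C. dom C f \<in> Ob C \<and> cod C f \<in> Ob C) \<and>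
     (\<forall>X\<in>Ob C. idm C X \<in> homs C X X) \<and>
     (\<forall>X Y Z f g. f \<in> homs C X Y \<longrightarrow> g \<in> homs C Y Z \<longrightarrow> comp C g f \<in> homs C X Z) \<and>
     (\<forall>X Y f. f \<in> homs C X Y \<longrightarrow> comp C f (idm C X) = f \<and> comp C (idm C Y) f = f) \<and>
     (\<forall>W X Y Z f g h. f \<in> homs C W X \<longrightarrow> g \<in> homs C X Y \<longrightarrow> h \<in> homs C Y Z \<longrightarrow>
        comp C h (comp C g f) = comp C (comp C h g) f)"

definition is_preadditive :: "('o,'m) excat \<Rightarrow> bool" where
  "is_preadditive C \<longleftrightarrow> is_category C \<and>
     (\<forall>X\<in>Ob C. \<forall>Y\<in>Ob C. zmor C X Y \<in> homs C X Y) \<and>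
     (\<forall>X Y f g. f \<in> homs C X Y \<longrightarrow> g \<in> homs C X Y \<longrightarrow> madd C f g \<in> homs C X Y) \<and>
     (\<forall>X Y f g h. f \<in> homs C X Y \<longrightarrow> g \<in> homs C X Y \<longrightarrow> h \<in> homs C X Y \<longrightarrow>
        madd C (madd C f g) h = madd C f (madd C g h)) \<and>
     (\<forall>X Y f g. f \<in> homs C X Y \<longrightarrow> g \<in> homs C X Y \<longrightarrow> madd C f g = madd C g f) \<and>
     (\<forall>X Y f. f \<in> homs C X Y \<longrightarrow> madd C f (zmor C X Y) = f) \<and>
     (\<forall>X Y f. f \<in> homs C X Y \<longrightarrow> (\<exists>g \<in> homs C X Y. madd C f g = zmor C X Y)) \<and>
     (\<forall>X Y Z f g h. f \<in> homs C X Y \<longrightarrow> g \<in> homs C X Y \<longrightarrow> h \<in> homs C Y Z \<longrightarrow>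
        comp C h (madd C f g) = madd C (comp C h f) (comp C h g)) \<and>
     (\<forall>W X Y f g h. h \<in> homs C W X \<longrightarrow> f \<in> homs C X Y \<longrightarrow> g \<in> homs C X Y \<longrightarrow>
        comp C (madd C f g) h = madd C (comp C f h) (comp C g h))"

definition is_zero_obj :: "('o,'m) excat \<Rightarrow> 'o \<Rightarrow> bool" where
  "is_zero_obj C Z \<longleftrightarrow> Z \<in> Ob C \<and>
     (\<forall>X\<in>Ob C. (\<exists>!f. f \<in> homs C X Z) \<and> (\<exists>!f. f \<in> homs C Z X))"

definition is_additive :: "('o,'m) excat \<Rightarrow> bool" where
  "is_additive C \<longleftrightarrow> is_preadditive C \<and> (\<exists>Z. is_zero_obj C Z) \<and>
     (\<forall>A\<in>Ob C. \<forall>B\<in>Ob C. \<exists>S i1 i2 p1 p2.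
        i1 \<in> homs C A S \<and> i2 \<in> homs C B S \<and> p1 \<in> homs C S A \<and> p2 \<in> homs C S B \<and>
        comp C p1 i1 = idm C A \<and> comp C p2 i2 = idm C B \<and>
        comp C p2 i1 = zmor C A B \<and> comp C p1 i2 = zmor C B A \<and>
        madd C (comp C i1 p1) (comp C i2 p2) = idm C S)"

definition is_iso :: "('o,'m) excat \<Rightarrow> 'm \<Rightarrow> bool" where
  "is_iso C f \<longleftrightarrow> f \<in> Mor C \<and> (\<exists>g \<in> homs C (cod C f) (dom C f).
      comp C g f = idm C (dom C f) \<and> comp C f g = idm C (cod C f))"

definition is_kernel_cokernel_pair :: "('o,'m) excat \<Rightarrow> 'm \<Rightarrow> 'm \<Rightarrow> bool" where
  "is_kernel_cokernel_pair C i p \<longleftrightarrow> i \<in> Mor C \<and> p \<in> Mor C \<and> cod C i = dom C p \<and>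
     comp C p i = zmor C (dom C i) (cod C p) \<and>
     (\<forall>X\<in>Ob C. \<forall>f \<in> homs C X (dom C p). comp C p f = zmor C X (cod C p) \<longrightarrow>
        (\<exists>!g. g \<in> homs C X (dom C i) \<and> comp C i g = f)) \<and>
     (\<forall>X\<in>Ob C. \<forall>f \<in> homs C (cod C i) X. comp C f i = zmor C (dom C i) X \<longrightarrow>
        (\<exists>!g. g \<in> homs C (cod C p) X \<and> comp C g p = f))"

definition adm_mono :: "('o,'m) excat \<Rightarrow> 'm \<Rightarrow> bool" where
  "adm_mono C i \<longleftrightarrow> (\<exists>p. (i, p) \<in> confl C)"

definition adm_epi :: "('o,'m) excat \<Rightarrow> 'm \<Rightarrow> bool" where
  "adm_epi C p \<longleftrightarrow> (\<exists>i. (i, p) \<in> confl C)"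

definition is_pushout :: "('o,'m) excat \<Rightarrow> 'm \<Rightarrow> 'm \<Rightarrow> 'm \<Rightarrow> 'm \<Rightarrow> bool" where
  "is_pushout C i f i' f' \<longleftrightarrow>
     i \<in> Mor C \<and> f \<in> Mor C \<and> i' \<in> Mor C \<and> f' \<in> Mor C \<and>
     dom C i = dom C f \<and> cod C f = dom C i' \<and> cod C i = dom C f' \<and> cod C i' = cod C f' \<and>
     comp C f' i = comp C i' f \<and>
     (\<forall>X\<in>Ob C. \<forall>g \<in> homs C (cod C i) X. \<forall>h \<in> homs C (cod C f) X. comp C g i = comp C h f \<longrightarrow>
        (\<exists>!u. u \<in> homs C (cod C f') X \<and> comp C u f' = g \<and> comp C u i' = h))"

definition is_pullback :: "('o,'m) excat \<Rightarrow> 'm \<Rightarrow> 'm \<Rightarrow> 'm \<Rightarrow> 'm \<Rightarrow> bool" where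
  "is_pullback C p f p' f' \<longleftrightarrow>
     p \<in> Mor C \<and> f \<in> Mor C \<and> p' \<in> Mor C \<and> f' \<in> Mor C \<and>
     cod C p = cod C f \<and> dom C f = cod C p' \<and> dom C p = cod C f' \<and> dom C p' = dom C f' \<and>
     comp C p f' = comp C f p' \<and>
     (\<forall>X\<in>Ob C. \<forall>g \<in> homs C X (dom C p). \<forall>h \<in> homs C X (dom C f). comp C p g = comp C f h \<longrightarrow>
        (\<exists>!u. u \<in> homs C X (dom C f') \<and> comp C f' u = g \<and> comp C p' u = h))"

definition exact_category :: "('o,'m) excat \<Rightarrow> bool" where
  "exact_category C \<longleftrightarrow> is_additive C \<and>
     (\<forall>(i, p) \<in> confl C. is_kernel_cokernel_pair C i p) \<and>
     \<comment> \<open>closed under isomorphisms of kernel-cokernel pairs\<close>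
     (\<forall>i p i' p' a b c. (i, p) \<in> confl C \<longrightarrow> is_kernel_cokernel_pair C i' p' \<longrightarrow>
        a \<in> homs C (dom C i) (dom C i') \<longrightarrow> b \<in> homs C (cod C i) (cod C i') \<longrightarrow>
        c \<in> homs C (cod C p) (cod C p') \<longrightarrow> is_iso C a \<longrightarrow> is_iso C b \<longrightarrow> is_iso C c \<longrightarrow>
        comp C i' a = comp C b i \<longrightarrow> comp C p' b = comp C c p \<longrightarrow> (i', p') \<in> confl C) \<and>
     \<comment> \<open>E0, E0op\<close>
     (\<forall>X\<in>Ob C. adm_mono C (idm C X) \<and> adm_epi C (idm C X)) \<and>
     \<comment> \<open>E1, E1op\<close>
     (\<forall>i j. adm_mono C i \<longrightarrow> adm_mono C j \<longrightarrow> cod C i = dom C j \<longrightarrow> adm_mono C (comp C j i)) \<and>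
     (\<forall>p q. adm_epi C p \<longrightarrow> adm_epi C q \<longrightarrow> cod C p = dom C q \<longrightarrow> adm_epi C (comp C q p)) \<and>
     \<comment> \<open>E2: pushouts along admissible monos\<close>
     (\<forall>i f. adm_mono C i \<longrightarrow> f \<in> Mor C \<longrightarrow> dom C f = dom C i \<longrightarrow>
        (\<exists>i' f'. is_pushout C i f i' f' \<and> adm_mono C i')) \<and>
     \<comment> \<open>E2op: pullbacks along admissible epis\<close>
     (\<forall>p f. adm_epi C p \<longrightarrow> f \<in> Mor C \<longrightarrow> cod C f = cod C p \<longrightarrow>
        (\<exists>p' f'. is_pullback C p f p' f' \<and> adm_epi C p'))"

text \<open>Acyclic: d n factors as P (n+1) \<rightarrow> J n (admissible epi e n) followed by J n \<rightarrow> P n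
  (admissible mono m n), with J (n+1) \<rightarrow> P (n+1) \<rightarrow> J n a conflation, and in degree 0
  (where J (-1) = 0) a conflation J 0 \<rightarrow> P 0 \<rightarrow> 0.\<close>
definition acyclic :: "('o,'m) excat \<Rightarrow> (nat \<Rightarrow> 'o) \<Rightarrow> (nat \<Rightarrow> 'm) \<Rightarrow> bool" where
  "acyclic C P d \<longleftrightarrow> (\<forall>n. d n \<in> homs C (P (Suc n)) (P n)) \<and>
     (\<exists>J e m. (\<forall>n. e n \<in> homs C (P (Suc n)) (J n) \<and> m n \<in> homs C (J n) (P n) \<and>
                    d n = comp C (m n) (e n) \<and> (m (Suc n), e n) \<in> confl C) \<and>
              (\<exists>z q. is_zero_obj C z \<and> q \<in> homs C (P 0) z \<and> (m 0, q) \<in> confl C))"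

type_synonym ('o, 'm) bcx = "(nat \<Rightarrow> 'o) \<times> (nat \<Rightarrow> 'm) \<times> (nat \<Rightarrow> 'm)"

definition binacyc :: "('o,'m) excat \<Rightarrow> nat \<Rightarrow> ('o,'m) bcx set" where
  "binacyc C k = {(P, d, d'). (\<forall>n>k. is_zero_obj C (P n)) \<and> acyclic C P d \<and> acyclic C P d'}"

definition bmor :: "('o,'m) excat \<Rightarrow> ('o,'m) bcx \<Rightarrow> ('o,'m) bcx \<Rightarrow> (nat \<Rightarrow> 'm) \<Rightarrow> bool" where
  "bmor C X Y f \<longleftrightarrow> (case X of (P, d, d') \<Rightarrow> case Y of (Q, e, e') \<Rightarrow>
     (\<forall>n. f n \<in> homs C (P n) (Q n) \<and>
          comp C (f n) (d n) = comp C (e n) (f (Suc n)) \<and>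
          comp C (f n) (d' n) = comp C (e' n) (f (Suc n))))"

definition bconfl :: "('o,'m) excat \<Rightarrow> ('o,'m) bcx \<Rightarrow> ('o,'m) bcx \<Rightarrow> ('o,'m) bcx \<Rightarrow> bool" where
  "bconfl C X Y Z \<longleftrightarrow> (\<exists>f g. bmor C X Y f \<and> bmor C Y Z g \<and> (\<forall>n. (f n, g n) \<in> confl C))"

definition zobj :: "('o,'m) excat \<Rightarrow> 'o" where
  "zobj C = (SOME z. is_zero_obj C z)"

definition pair2 :: "('o,'m) excat \<Rightarrow> 'o \<Rightarrow> 'm \<Rightarrow> 'm \<Rightarrow> ('o,'m) bcx" where
  "pair2 C X a b =
     (let P = (\<lambda>n. if n \<le> 1 then X else zobj C) in
      (P, (\<lambda>n. if n = 0 then a else zmor C (P (Suc n)) (P n)),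
          (\<lambda>n. if n = 0 then b else zmor C (P (Suc n)) (P n))))"

abbreviation FA :: "('o,'m) excat \<Rightarrow> nat \<Rightarrow> (('o,'m) bcx \<Rightarrow>\<^sub>0 int) monoid" where
  "FA C k \<equiv> free_Abelian_group (binacyc C k)"

definition B_rels :: "('o,'m) excat \<Rightarrow> nat \<Rightarrow> (('o,'m) bcx \<Rightarrow>\<^sub>0 int) set" where
  "B_rels C k = {frag_of Y - frag_of X - frag_of Z | X Y Z.
       X \<in> binacyc C k \<and> Y \<in> binacyc C k \<and> Z \<in> binacyc C k \<and> bconfl C X Y Z}"

definition diag_rels :: "('o,'m) excat \<Rightarrow> nat \<Rightarrow> (('o,'m) bcx \<Rightarrow>\<^sub>0 int) set" where
  "diag_rels C k = {frag_of (P, d, d) | P d. (P, d, d) \<in> binacyc C k}"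

definition is_involution :: "('o,'m) excat \<Rightarrow> 'o \<Rightarrow> 'm \<Rightarrow> bool" where
  "is_involution C X s \<longleftrightarrow> s \<in> homs C X X \<and> comp C s s = idm C X"

text \<open>Ladder relations with P_i = Q_i and all sigma_i, tau_i involutions:
  Q - P = sum_{i=0}^k (-1)^i <sigma_i, tau_i>.  sigma, tau are chain isomorphisms
  (involutions are isomorphisms; chain condition for top resp. bottom differentials).\<close>
definition ladder_rels :: "('o,'m) excat \<Rightarrow> nat \<Rightarrow> (('o,'m) bcx \<Rightarrow>\<^sub>0 int) set" where
  "ladder_rels C k = {frag_of (P, e, e') - frag_of (P, d, d')
        - (\<Sum>i\<in>{0..k}. frag_cmul ((-1) ^ i) (frag_of (pair2 C (P i) (\<sigma> i) (\<tau> i))))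
     | P d d' e e' \<sigma> \<tau>.
       (P, d, d') \<in> binacyc C k \<and> (P, e, e') \<in> binacyc C k \<and>
       (\<forall>n. is_involution C (P n) (\<sigma> n) \<and> is_involution C (P n) (\<tau> n) \<and>
            comp C (\<sigma> n) (d n) = comp C (e n) (\<sigma> (Suc n)) \<and>
            comp C (\<tau> n) (d' n) = comp C (e' n) (\<tau> (Suc n)))}"

definition K_sub :: "('o,'m) excat \<Rightarrow> nat \<Rightarrow> (('o,'m) bcx \<Rightarrow>\<^sub>0 int) set" where
  "K_sub C k = generate (FA C k) (B_rels C k \<union> diag_rels C k)"

definition L_sub :: "('o,'m) excat \<Rightarrow> nat \<Rightarrow> (('o,'m) bcx \<Rightarrow>\<^sub>0 int) set" where
  "L_sub C k = generate (FA C k) (B_rels C k \<union> diag_rels C k \<union> ladder_rels C k)"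

definition K1 :: "('o,'m) excat \<Rightarrow> nat \<Rightarrow> _" where
  "K1 C k = FA C k Mod K_sub C k"

definition L1 :: "('o,'m) excat \<Rightarrow> nat \<Rightarrow> _" where
  "L1 C k = FA C k Mod L_sub C k"

definition Kcls :: "('o,'m) excat \<Rightarrow> nat \<Rightarrow> ('o,'m) bcx \<Rightarrow> _" where
  "Kcls C k X = K_sub C k #>\<^bsub>FA C k\<^esub> frag_of X"

definition Lcls :: "('o,'m) excat \<Rightarrow> nat \<Rightarrow> ('o,'m) bcx \<Rightarrow> _" where
  "Lcls C k X = L_sub C k #>\<^bsub>FA C k\<^esub> frag_of X"

end

theory Submission
  imports Defs
begin

lemma fa_sub_facts:
  assumes "subgroup H (free_Abelian_group S)"
  shows "0 \<in> H" "\<And>a b. a \<in> H \<Longrightarrow> b \<in> H \<Longrightarrow> a + b \<in> H" "\<And>a. a \<in> H \<Longrightarrow> - a \<in> H"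
    "\<And>a b. a \<in> H \<Longrightarrow> b \<in> H \<Longrightarrow> a - b \<in> H" "H \<subseteq> {c. Poly_Mapping.keys c \<subseteq> S}"
proof -
  interpret subgroup H "free_Abelian_group S" by fact
  show "0 \<in> H" using one_closed by simp
  show ab: "\<And>a b. a \<in> H \<Longrightarrow> b \<in> H \<Longrightarrow> a + b \<in> H" using m_closed by simp
  have sub: "\<And>a. a \<in> H \<Longrightarrow> Poly_Mapping.keys a \<subseteq> S"
  proof -
    fix a assume "a \<in> H" then have "a \<in> carrier (free_Abelian_group S)" using subset by blast
    then show "Poly_Mapping.keys a \<subseteq> S" by simp
  qed
  show mi: "\<And>a. a \<in> H \<Longrightarrow> - a \<in> H"
  proof -
    fix a assume a: "a \<in> H"
    have "inv\<^bsub>free_Abelian_group S\<^esub> a \<in> H" using m_inv_closed a by blast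
    then show "- a \<in> H" using inv_free_Abelian_group[OF sub[OF a]] by simp
  qed
  show "\<And>a b. a \<in> H \<Longrightarrow> b \<in> H \<Longrightarrow> a - b \<in> H" using ab mi by (metis diff_conv_add_uminus)
  show "H \<subseteq> {c. Poly_Mapping.keys c \<subseteq> S}"
    using sub by blast
qed

lemma fa_rcoset: "r_coset (free_Abelian_group S) H x = (\<lambda>h. h + x) ` H"
  by (auto simp: r_coset_def)

lemma fa_coset_eq:
  assumes "subgroup H (free_Abelian_group S)"
  shows "r_coset (free_Abelian_group S) H x = r_coset (free_Abelian_group S) H y \<longleftrightarrow> x - y \<in> H"
proof
  note F = fa_sub_facts[OF assms]
  assume "r_coset (free_Abelian_group S) H x = r_coset (free_Abelian_group S) H y"
  then have "0 + x \<in> (\<lambda>h. h + y) ` H" using F(1) by (auto simp: fa_rcoset)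
  then obtain h where "h \<in> H" "x = h + y" by auto
  then show "x - y \<in> H" by simp
next
  note F = fa_sub_facts[OF assms]
  assume d: "x - y \<in> H"
  show "r_coset (free_Abelian_group S) H x = r_coset (free_Abelian_group S) H y"
    unfolding fa_rcoset
  proof (intro equalityI subsetI)
    fix z assume "z \<in> (\<lambda>h. h + x) ` H"
    then obtain h where h: "h \<in> H" "z = h + x" by auto
    have "h + (x - y) \<in> H" using F(2) h d by auto
    moreover have "z = (h + (x - y)) + y" using h by simp
    ultimately show "z \<in> (\<lambda>h. h + y) ` H" by blast
  next
    fix z assume "z \<in> (\<lambda>h. h + y) ` H"
    then obtain h where h: "h \<in> H" "z = h + y" by auto
    have "h - (x - y) \<in> H" using F(4) h d by auto
    moreover have "z = (h - (x - y)) + x" using h by simp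
    ultimately show "z \<in> (\<lambda>h. h + x) ` H" by blast
  qed
qed

lemma binacyc_mono: "k \<le> k' \<Longrightarrow> binacyc C k \<subseteq> binacyc C k'"
  unfolding binacyc_def by (auto intro: order.strict_trans1)

lemma gen_sub_carrier:
  "A \<subseteq> carrier (free_Abelian_group S) \<Longrightarrow> subgroup (generate (free_Abelian_group S) A) (free_Abelian_group S)"
  by (simp add: group.generate_is_subgroup)

lemma B_rels_carrier: "B_rels C k \<subseteq> carrier (FA C k)"
proof
  fix x assume "x \<in> B_rels C k"
  then obtain X Y Z where "x = frag_of Y - frag_of X - frag_of Z" "X \<in> binacyc C k" "Y \<in> binacyc C k" "Z \<in> binacyc C k"
    unfolding B_rels_def by blast
  then show "x \<in> carrier (FA C k)"
  proof -
    have "Poly_Mapping.keys (frag_of Y - frag_of X - frag_of Z) \<subseteq> Poly_Mapping.keys (frag_of Y - frag_of X) \<union> Poly_Mapping.keys (frag_of Z)"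
      by (rule keys_diff)
    also have "\<dots> \<subseteq> Poly_Mapping.keys (frag_of Y) \<union> Poly_Mapping.keys (frag_of X) \<union> Poly_Mapping.keys (frag_of Z)"
      using keys_diff[of "frag_of Y" "frag_of X"] by blast
    finally show ?thesis using \<open>x = _\<close> \<open>X \<in> _\<close> \<open>Y \<in> _\<close> \<open>Z \<in> _\<close> by (simp add: keys_frag_of) blast
  qed
qed

lemma diag_rels_carrier: "diag_rels C k \<subseteq> carrier (FA C k)"
  unfolding diag_rels_def by auto


lemma B_rels_mono: "B_rels C k \<subseteq> B_rels C (Suc k)"
proof
  fix x assume "x \<in> B_rels C k"
  then obtain X Y Z where "x = frag_of Y - frag_of X - frag_of Z" "X \<in> binacyc C k" "Y \<in> binacyc C k" "Z \<in> binacyc C k" "bconfl C X Y Z"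
    unfolding B_rels_def by blast
  moreover have "binacyc C k \<subseteq> binacyc C (Suc k)" by (rule binacyc_mono) simp
  ultimately show "x \<in> B_rels C (Suc k)" unfolding B_rels_def by blast
qed

lemma diag_rels_mono: "diag_rels C k \<subseteq> diag_rels C (Suc k)"
proof
  fix x assume "x \<in> diag_rels C k"
  then obtain P d where "x = frag_of (P, d, d)" "(P, d, d) \<in> binacyc C k"
    unfolding diag_rels_def by blast
  moreover have "binacyc C k \<subseteq> binacyc C (Suc k)" by (rule binacyc_mono) simp
  ultimately show "x \<in> diag_rels C (Suc k)" unfolding diag_rels_def by blast
qed

lemma K_sub_subgroup: "subgroup (K_sub C k) (FA C k)"
  unfolding K_sub_def by (rule gen_sub_carrier) (use B_rels_carrier diag_rels_carrier in blast)


locale xc =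
  fixes C :: "('o,'m) excat"
  assumes ec: "exact_category C"
begin

abbreviation cc (infixr "\<cdot>" 70) where "g \<cdot> f \<equiv> comp C g f"
abbreviation ad (infixl "\<boxplus>" 65) where "f \<boxplus> g \<equiv> madd C f g"
abbreviation Hom where "Hom X Y \<equiv> homs C X Y"
abbreviation Z0 where "Z0 \<equiv> zobj C"
abbreviation isz where "isz X \<equiv> is_zero_obj C X"

lemma add: "is_additive C" using ec unfolding exact_category_def by blast
lemma pre: "is_preadditive C" using add unfolding is_additive_def by blast
lemma cat: "is_category C" using pre unfolding is_preadditive_def by blast

lemma homs_iff: "f \<in> Hom X Y \<longleftrightarrow> f \<in> Mor C \<and> dom C f = X \<and> cod C f = Y"
  unfolding homs_def by auto

lemma homI[intro]: "f \<in> Mor C \<Longrightarrow> dom C f = X \<Longrightarrow> cod C f = Y \<Longrightarrow> f \<in> Hom X Y"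
  unfolding homs_def by auto

lemma homD: "f \<in> Hom X Y \<Longrightarrow> f \<in> Mor C" "f \<in> Hom X Y \<Longrightarrow> dom C f = X" "f \<in> Hom X Y \<Longrightarrow> cod C f = Y"
  unfolding homs_def by auto

lemmas CA0 = cat[unfolded is_category_def]
lemmas CA = CA0[THEN conjunct1] CA0[THEN conjunct2, THEN conjunct1] CA0[THEN conjunct2, THEN conjunct2, THEN conjunct1] CA0[THEN conjunct2, THEN conjunct2, THEN conjunct2, THEN conjunct1] CA0[THEN conjunct2, THEN conjunct2, THEN conjunct2, THEN conjunct2]

lemma homT: "f \<in> Hom X Y \<Longrightarrow> f \<in> Mor C" "f \<in> Hom X Y \<Longrightarrow> dom C f = X" "f \<in> Hom X Y \<Longrightarrow> cod C f = Y"
  "f \<in> Hom X Y \<Longrightarrow> X \<in> Ob C" "f \<in> Hom X Y \<Longrightarrow> Y \<in> Ob C"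
  using CA(1) unfolding homs_def by auto

lemma dom_ob[simp]: "f \<in> Mor C \<Longrightarrow> dom C f \<in> Ob C"
  and cod_ob[simp]: "f \<in> Mor C \<Longrightarrow> cod C f \<in> Ob C"
  using CA(1) by blast+

lemma id_hom: "X \<in> Ob C \<Longrightarrow> idm C X \<in> Hom X X"
  using CA(2) by blast

lemma id_mor[simp]: "X \<in> Ob C \<Longrightarrow> idm C X \<in> Mor C"
  and id_dom[simp]: "X \<in> Ob C \<Longrightarrow> dom C (idm C X) = X"
  and id_cod[simp]: "X \<in> Ob C \<Longrightarrow> cod C (idm C X) = X"
  using id_hom homD by blast+

lemma comp_hom: "f \<in> Hom X Y \<Longrightarrow> g \<in> Hom Y Z \<Longrightarrow> g \<cdot> f \<in> Hom X Z"
  using CA(3) by blast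

lemma comp_mor[simp]: "f \<in> Mor C \<Longrightarrow> g \<in> Mor C \<Longrightarrow> cod C f = dom C g \<Longrightarrow> g \<cdot> f \<in> Mor C"
  and comp_dom[simp]: "f \<in> Mor C \<Longrightarrow> g \<in> Mor C \<Longrightarrow> cod C f = dom C g \<Longrightarrow> dom C (g \<cdot> f) = dom C f"
  and comp_cod[simp]: "f \<in> Mor C \<Longrightarrow> g \<in> Mor C \<Longrightarrow> cod C f = dom C g \<Longrightarrow> cod C (g \<cdot> f) = cod C g"
  using comp_hom[of f "dom C f" "cod C f" g "cod C g"] homs_iff by auto

lemma id_left[simp]: "f \<in> Mor C \<Longrightarrow> X = cod C f \<Longrightarrow> idm C X \<cdot> f = f"
  and id_right[simp]: "f \<in> Mor C \<Longrightarrow> X = dom C f \<Longrightarrow> f \<cdot> idm C X = f"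
proof -
  assume "f \<in> Mor C" "X = cod C f"
  then have "f \<in> Hom (dom C f) X" by auto
  then show "idm C X \<cdot> f = f" using CA(4) by blast
next
  assume "f \<in> Mor C" "X = dom C f"
  then have "f \<in> Hom X (cod C f)" by auto
  then show "f \<cdot> idm C X = f" using CA(4) by blast
qed

lemma assoc[simp]: "f \<in> Mor C \<Longrightarrow> g \<in> Mor C \<Longrightarrow> h \<in> Mor C \<Longrightarrow> cod C f = dom C g \<Longrightarrow> cod C g = dom C h
   \<Longrightarrow> (h \<cdot> g) \<cdot> f = h \<cdot> (g \<cdot> f)"
proof -
  assume a: "f \<in> Mor C" "g \<in> Mor C" "h \<in> Mor C" "cod C f = dom C g" "cod C g = dom C h"
  have "f \<in> Hom (dom C f) (cod C f)" "g \<in> Hom (cod C f) (cod C g)" "h \<in> Hom (cod C g) (cod C h)"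
    using a by auto
  then have "h \<cdot> (g \<cdot> f) = (h \<cdot> g) \<cdot> f" using CA(5) by blast
  then show ?thesis by (rule sym)
qed

lemmas PA0 = pre[unfolded is_preadditive_def]
lemmas PA = PA0[THEN conjunct2, THEN conjunct1] PA0[THEN conjunct2, THEN conjunct2, THEN conjunct1] PA0[THEN conjunct2, THEN conjunct2, THEN conjunct2, THEN conjunct1] PA0[THEN conjunct2, THEN conjunct2, THEN conjunct2, THEN conjunct2, THEN conjunct1] PA0[THEN conjunct2, THEN conjunct2, THEN conjunct2, THEN conjunct2, THEN conjunct2, THEN conjunct1] PA0[THEN conjunct2, THEN conjunct2, THEN conjunct2, THEN conjunct2, THEN conjunct2, THEN conjunct2, THEN conjunct1] PA0[THEN conjunct2, THEN conjunct2, THEN conjunct2, THEN conjunct2, THEN conjunct2, THEN conjunct2, THEN conjunct2, THEN conjunct1] PA0[THEN conjunct2, THEN conjunct2, THEN conjunct2, THEN conjunct2, THEN conjunct2, THEN conjunct2, THEN conjunct2, THEN conjunct2]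

lemma zmor_hom: "X \<in> Ob C \<Longrightarrow> Y \<in> Ob C \<Longrightarrow> zmor C X Y \<in> Hom X Y"
  using PA(1) by blast

lemma zmor_mor[simp]: "X \<in> Ob C \<Longrightarrow> Y \<in> Ob C \<Longrightarrow> zmor C X Y \<in> Mor C"
  and zmor_dom[simp]: "X \<in> Ob C \<Longrightarrow> Y \<in> Ob C \<Longrightarrow> dom C (zmor C X Y) = X"
  and zmor_cod[simp]: "X \<in> Ob C \<Longrightarrow> Y \<in> Ob C \<Longrightarrow> cod C (zmor C X Y) = Y"
  using zmor_hom homD by blast+

lemma add_hom: "f \<in> Hom X Y \<Longrightarrow> g \<in> Hom X Y \<Longrightarrow> f \<boxplus> g \<in> Hom X Y"
  using PA(2) by blast

lemma add_mor[simp]: "f \<in> Mor C \<Longrightarrow> g \<in> Mor C \<Longrightarrow> dom C f = dom C g \<Longrightarrow> cod C f = cod C g \<Longrightarrow> f \<boxplus> g \<in> Mor C"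
  and add_dom[simp]: "f \<in> Mor C \<Longrightarrow> g \<in> Mor C \<Longrightarrow> dom C f = dom C g \<Longrightarrow> cod C f = cod C g \<Longrightarrow> dom C (f \<boxplus> g) = dom C f"
  and add_cod[simp]: "f \<in> Mor C \<Longrightarrow> g \<in> Mor C \<Longrightarrow> dom C f = dom C g \<Longrightarrow> cod C f = cod C g \<Longrightarrow> cod C (f \<boxplus> g) = cod C f"
  using add_hom[of f "dom C f" "cod C f" g] homs_iff by auto

lemma add_assoc[simp]: "f \<in> Mor C \<Longrightarrow> g \<in> Mor C \<Longrightarrow> h \<in> Mor C \<Longrightarrow> dom C f = dom C g \<Longrightarrow> cod C f = cod C g
   \<Longrightarrow> dom C h = dom C g \<Longrightarrow> cod C h = cod C g \<Longrightarrow> (f \<boxplus> g) \<boxplus> h = f \<boxplus> (g \<boxplus> h)"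
proof -
  assume a: "f \<in> Mor C" "g \<in> Mor C" "h \<in> Mor C" "dom C f = dom C g" "cod C f = cod C g" "dom C h = dom C g" "cod C h = cod C g"
  then have "f \<in> Hom (dom C f) (cod C f)" "g \<in> Hom (dom C f) (cod C f)" "h \<in> Hom (dom C f) (cod C f)" by auto
  then show ?thesis using PA(3)[rule_format] by metis
qed

lemma add_comm: "f \<in> Mor C \<Longrightarrow> g \<in> Mor C \<Longrightarrow> dom C f = dom C g \<Longrightarrow> cod C f = cod C g \<Longrightarrow> f \<boxplus> g = g \<boxplus> f"
proof -
  assume a: "f \<in> Mor C" "g \<in> Mor C" "dom C f = dom C g" "cod C f = cod C g"
  then have "f \<in> Hom (dom C f) (cod C f)" "g \<in> Hom (dom C f) (cod C f)" by auto
  then show ?thesis using PA(4)[rule_format] by metis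
qed

lemma add_zero_right[simp]: "f \<in> Mor C \<Longrightarrow> X = dom C f \<Longrightarrow> Y = cod C f \<Longrightarrow> f \<boxplus> zmor C X Y = f"
proof -
  assume "f \<in> Mor C" "X = dom C f" "Y = cod C f"
  then have "f \<in> Hom X Y" by auto
  then show ?thesis using PA(5)[rule_format] by metis
qed

lemma add_zero_left[simp]: "f \<in> Mor C \<Longrightarrow> X = dom C f \<Longrightarrow> Y = cod C f \<Longrightarrow> zmor C X Y \<boxplus> f = f"
proof -
  assume a: "f \<in> Mor C" "X = dom C f" "Y = cod C f"
  have "zmor C X Y \<boxplus> f = f \<boxplus> zmor C X Y" using a by (intro add_comm) auto
  also have "\<dots> = f" using a by simp
  finally show ?thesis .
qed

lemma comp_add_left: "f \<in> Mor C \<Longrightarrow> g \<in> Mor C \<Longrightarrow> h \<in> Mor C \<Longrightarrow> dom C f = dom C g \<Longrightarrow> cod C f = cod C g \<Longrightarrow> cod C f = dom C h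
   \<Longrightarrow> h \<cdot> (f \<boxplus> g) = (h \<cdot> f) \<boxplus> (h \<cdot> g)"
proof -
  assume a: "f \<in> Mor C" "g \<in> Mor C" "h \<in> Mor C" "dom C f = dom C g" "cod C f = cod C g" "cod C f = dom C h"
  then have "f \<in> Hom (dom C f) (cod C f)" "g \<in> Hom (dom C f) (cod C f)" "h \<in> Hom (cod C f) (cod C h)" by auto
  then show ?thesis using PA(7)[rule_format] by metis
qed

lemma comp_add_right: "f \<in> Mor C \<Longrightarrow> g \<in> Mor C \<Longrightarrow> h \<in> Mor C \<Longrightarrow> dom C f = dom C g \<Longrightarrow> cod C f = cod C g \<Longrightarrow> cod C h = dom C f
   \<Longrightarrow> (f \<boxplus> g) \<cdot> h = (f \<cdot> h) \<boxplus> (g \<cdot> h)"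
proof -
  assume a: "f \<in> Mor C" "g \<in> Mor C" "h \<in> Mor C" "dom C f = dom C g" "cod C f = cod C g" "cod C h = dom C f"
  then have "f \<in> Hom (dom C f) (cod C f)" "g \<in> Hom (dom C f) (cod C f)" "h \<in> Hom (dom C h) (dom C f)" by auto
  then show ?thesis using PA(8)[rule_format] by metis
qed


lemma neg_ex: "f \<in> Mor C \<Longrightarrow> \<exists>g. g \<in> Hom (dom C f) (cod C f) \<and> f \<boxplus> g = zmor C (dom C f) (cod C f)"
proof -
  assume "f \<in> Mor C"
  then have "f \<in> Hom (dom C f) (cod C f)" by auto
  then show ?thesis using PA(6) by blast
qed

definition neg where "neg f = (SOME g. g \<in> Hom (dom C f) (cod C f) \<and> f \<boxplus> g = zmor C (dom C f) (cod C f))"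

lemma neg_props: "f \<in> Mor C \<Longrightarrow> neg f \<in> Hom (dom C f) (cod C f) \<and> f \<boxplus> neg f = zmor C (dom C f) (cod C f)"
proof -
  assume f: "f \<in> Mor C"
  show ?thesis unfolding neg_def using someI_ex[OF neg_ex[OF f]] .
qed

lemma neg_hom: "f \<in> Mor C \<Longrightarrow> neg f \<in> Hom (dom C f) (cod C f)"
  using neg_props by blast

lemma neg_mor[simp]: "f \<in> Mor C \<Longrightarrow> neg f \<in> Mor C"
  and neg_dom[simp]: "f \<in> Mor C \<Longrightarrow> dom C (neg f) = dom C f"
  and neg_cod[simp]: "f \<in> Mor C \<Longrightarrow> cod C (neg f) = cod C f"
  and add_neg[simp]: "f \<in> Mor C \<Longrightarrow> f \<boxplus> neg f = zmor C (dom C f) (cod C f)"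
  using neg_hom[of f] neg_props[of f] by (simp_all add: homs_iff)

lemma neg_add[simp]: "f \<in> Mor C \<Longrightarrow> neg f \<boxplus> f = zmor C (dom C f) (cod C f)"
proof -
  assume a: "f \<in> Mor C"
  have "neg f \<boxplus> f = f \<boxplus> neg f" using a by (intro add_comm) auto
  also have "\<dots> = zmor C (dom C f) (cod C f)" using a by simp
  finally show ?thesis .
qed

lemma add_cancel: assumes "f \<in> Mor C" "g \<in> Mor C" "h \<in> Mor C" "dom C f = dom C h" "cod C f = cod C h"
  "dom C g = dom C h" "cod C g = cod C h" "f \<boxplus> h = g \<boxplus> h" shows "f = g"
proof -
  have "(f \<boxplus> h) \<boxplus> neg h = f \<boxplus> (h \<boxplus> neg h)" using assms by (intro add_assoc) auto
  also have "\<dots> = f" using assms by simp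
  finally have 1: "(f \<boxplus> h) \<boxplus> neg h = f" .
  have "(g \<boxplus> h) \<boxplus> neg h = g \<boxplus> (h \<boxplus> neg h)" using assms by (intro add_assoc) auto
  also have "\<dots> = g" using assms by simp
  finally have 2: "(g \<boxplus> h) \<boxplus> neg h = g" .
  show ?thesis using 1 2 assms(8) by metis
qed

lemma comp_zero_right[simp]: "f \<in> Mor C \<Longrightarrow> X \<in> Ob C \<Longrightarrow> Y = dom C f \<Longrightarrow> f \<cdot> zmor C X Y = zmor C X (cod C f)"
proof -
  assume a: "f \<in> Mor C" "X \<in> Ob C" "Y = dom C f"
  have "f \<cdot> zmor C X Y \<boxplus> f \<cdot> zmor C X Y = f \<cdot> (zmor C X Y \<boxplus> zmor C X Y)"
    using a by (intro comp_add_left[symmetric]) auto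
  also have "\<dots> = f \<cdot> zmor C X Y" using a by simp
  also have "\<dots> = zmor C X (cod C f) \<boxplus> f \<cdot> zmor C X Y" using a by simp
  finally have e: "f \<cdot> zmor C X Y \<boxplus> f \<cdot> zmor C X Y = zmor C X (cod C f) \<boxplus> f \<cdot> zmor C X Y" .
  show ?thesis by (rule add_cancel[OF _ _ _ _ _ _ _ e]) (use a in simp_all)
qed

lemma comp_zero_left[simp]: "f \<in> Mor C \<Longrightarrow> Y \<in> Ob C \<Longrightarrow> X = cod C f \<Longrightarrow> zmor C X Y \<cdot> f = zmor C (dom C f) Y"
proof -
  assume a: "f \<in> Mor C" "Y \<in> Ob C" "X = cod C f"
  have "zmor C X Y \<cdot> f \<boxplus> zmor C X Y \<cdot> f = (zmor C X Y \<boxplus> zmor C X Y) \<cdot> f"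
    using a by (intro comp_add_right[symmetric]) auto
  also have "\<dots> = zmor C X Y \<cdot> f" using a by simp
  also have "\<dots> = zmor C (dom C f) Y \<boxplus> zmor C X Y \<cdot> f" using a by simp
  finally have e: "zmor C X Y \<cdot> f \<boxplus> zmor C X Y \<cdot> f = zmor C (dom C f) Y \<boxplus> zmor C X Y \<cdot> f" .
  show ?thesis by (rule add_cancel[OF _ _ _ _ _ _ _ e]) (use a in simp_all)
qed

lemma neg_unique: "f \<in> Mor C \<Longrightarrow> g \<in> Mor C \<Longrightarrow> dom C g = dom C f \<Longrightarrow> cod C g = cod C f \<Longrightarrow>
   f \<boxplus> g = zmor C (dom C f) (cod C f) \<Longrightarrow> g = neg f"
  by (rule add_cancel[of _ _ f]) (auto simp: add_comm[of g f])

lemma neg_neg[simp]: "f \<in> Mor C \<Longrightarrow> neg (neg f) = f"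
  by (metis neg_unique neg_add neg_mor neg_dom neg_cod)

lemma neg_comp_left[simp]: "f \<in> Mor C \<Longrightarrow> g \<in> Mor C \<Longrightarrow> cod C f = dom C g \<Longrightarrow> neg g \<cdot> f = neg (g \<cdot> f)"
proof -
  assume a: "f \<in> Mor C" "g \<in> Mor C" "cod C f = dom C g"
  have "g \<cdot> f \<boxplus> neg g \<cdot> f = (g \<boxplus> neg g) \<cdot> f" using a by (intro comp_add_right[symmetric]) auto
  also have "\<dots> = zmor C (dom C (g \<cdot> f)) (cod C (g \<cdot> f))" using a by simp
  finally show ?thesis using a by (intro neg_unique) auto
qed

lemma neg_comp_right[simp]: "f \<in> Mor C \<Longrightarrow> g \<in> Mor C \<Longrightarrow> cod C f = dom C g \<Longrightarrow> g \<cdot> neg f = neg (g \<cdot> f)"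
proof -
  assume a: "f \<in> Mor C" "g \<in> Mor C" "cod C f = dom C g"
  have "g \<cdot> f \<boxplus> g \<cdot> neg f = g \<cdot> (f \<boxplus> neg f)" using a by (intro comp_add_left[symmetric]) auto
  also have "\<dots> = zmor C (dom C (g \<cdot> f)) (cod C (g \<cdot> f))" using a by simp
  finally show ?thesis using a by (intro neg_unique) auto
qed

lemma neg_zero[simp]: "X \<in> Ob C \<Longrightarrow> Y \<in> Ob C \<Longrightarrow> neg (zmor C X Y) = zmor C X Y"
  by (rule sym, rule neg_unique) auto


subsection \<open>Zero objects\<close>

lemma zobj_zero: "isz Z0"
proof -
  have "\<exists>Z. isz Z" using add unfolding is_additive_def by blast
  then show ?thesis unfolding zobj_def by (rule someI_ex)
qed

lemma zero_ob: "isz Z \<Longrightarrow> Z \<in> Ob C" unfolding is_zero_obj_def by blast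

lemma Z0_ob[simp]: "Z0 \<in> Ob C" using zobj_zero zero_ob by blast

lemma zero_from: "isz Z \<Longrightarrow> f \<in> Hom Z X \<Longrightarrow> f = zmor C Z X"
proof -
  assume z: "isz Z" and f: "f \<in> Hom Z X"
  have X: "X \<in> Ob C" using f homs_iff cod_ob by metis
  have "zmor C Z X \<in> Hom Z X" using zmor_hom zero_ob[OF z] X by blast
  then show ?thesis using z f X unfolding is_zero_obj_def by metis
qed

lemma zero_to: "isz Z \<Longrightarrow> f \<in> Hom X Z \<Longrightarrow> f = zmor C X Z"
proof -
  assume z: "isz Z" and f: "f \<in> Hom X Z"
  have X: "X \<in> Ob C" using f homs_iff dom_ob by metis
  have "zmor C X Z \<in> Hom X Z" using zmor_hom zero_ob[OF z] X by blast
  then show ?thesis using z f X unfolding is_zero_obj_def by metis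
qed

lemma thru_zero: "isz Z \<Longrightarrow> g \<in> Hom X Z \<Longrightarrow> f \<in> Hom Z Y \<Longrightarrow> f \<cdot> g = zmor C X Y"
proof -
  assume z: "isz Z" and g: "g \<in> Hom X Z" and f: "f \<in> Hom Z Y"
  have "f = zmor C Z Y" using zero_from z f by blast
  then show ?thesis using g f homT[OF f] homT[OF g] by simp
qed

lemma eq_from_zero: "isz Z \<Longrightarrow> f \<in> Hom Z X \<Longrightarrow> g \<in> Hom Z X \<Longrightarrow> f = g"
  using zero_from by metis

lemma eq_to_zero: "isz Z \<Longrightarrow> f \<in> Hom X Z \<Longrightarrow> g \<in> Hom X Z \<Longrightarrow> f = g"
  using zero_to by metis

lemma isoI: "f \<in> Hom X Y \<Longrightarrow> g \<in> Hom Y X \<Longrightarrow> g \<cdot> f = idm C X \<Longrightarrow> f \<cdot> g = idm C Y \<Longrightarrow> is_iso C f"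
  unfolding is_iso_def by (auto simp: homs_iff)

lemma zero_iso: "isz Z \<Longrightarrow> isz Z' \<Longrightarrow> f \<in> Hom Z Z' \<Longrightarrow> is_iso C f"
proof -
  assume z: "isz Z" "isz Z'" and f: "f \<in> Hom Z Z'"
  have g: "zmor C Z' Z \<in> Hom Z' Z" using zmor_hom zero_ob z by blast
  have "zmor C Z' Z \<cdot> f \<in> Hom Z Z" "f \<cdot> zmor C Z' Z \<in> Hom Z' Z'" using comp_hom f g by blast+
  moreover have "idm C Z \<in> Hom Z Z" "idm C Z' \<in> Hom Z' Z'" using id_hom zero_ob z by blast+
  ultimately show ?thesis using isoI[OF f g] eq_from_zero z by metis
qed

subsection \<open>Exactness axioms\<close>

lemmas EA0 = ec[unfolded exact_category_def]
lemmas EA = EA0[THEN conjunct2, THEN conjunct1] EA0[THEN conjunct2, THEN conjunct2, THEN conjunct1]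
  EA0[THEN conjunct2, THEN conjunct2, THEN conjunct2, THEN conjunct1]
  EA0[THEN conjunct2, THEN conjunct2, THEN conjunct2, THEN conjunct2, THEN conjunct1]
  EA0[THEN conjunct2, THEN conjunct2, THEN conjunct2, THEN conjunct2, THEN conjunct2, THEN conjunct1]
  EA0[THEN conjunct2, THEN conjunct2, THEN conjunct2, THEN conjunct2, THEN conjunct2, THEN conjunct2, THEN conjunct1]
  EA0[THEN conjunct2, THEN conjunct2, THEN conjunct2, THEN conjunct2, THEN conjunct2, THEN conjunct2, THEN conjunct2]

lemma confl_kcp: "(i, p) \<in> confl C \<Longrightarrow> is_kernel_cokernel_pair C i p"
  using EA(1) by blast

lemma iso_closure: "(i, p) \<in> confl C \<Longrightarrow> is_kernel_cokernel_pair C i' p' \<Longrightarrow>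
        a \<in> Hom (dom C i) (dom C i') \<Longrightarrow> b \<in> Hom (cod C i) (cod C i') \<Longrightarrow>
        c \<in> Hom (cod C p) (cod C p') \<Longrightarrow> is_iso C a \<Longrightarrow> is_iso C b \<Longrightarrow> is_iso C c \<Longrightarrow>
        i' \<cdot> a = b \<cdot> i \<Longrightarrow> p' \<cdot> b = c \<cdot> p \<Longrightarrow> (i', p') \<in> confl C"
  using EA(2) by blast

lemma comp_eq_ext: "g \<cdot> f = h \<cdot> k \<Longrightarrow> f \<in> Mor C \<Longrightarrow> g \<in> Mor C \<Longrightarrow> h \<in> Mor C \<Longrightarrow> k \<in> Mor C \<Longrightarrow> x \<in> Mor C
  \<Longrightarrow> cod C f = dom C g \<Longrightarrow> cod C k = dom C h \<Longrightarrow> cod C x = dom C f \<Longrightarrow> cod C x = dom C k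
  \<Longrightarrow> g \<cdot> (f \<cdot> x) = h \<cdot> (k \<cdot> x)"
  by (metis assoc)

lemma kcp_transport:
  assumes kcp: "is_kernel_cokernel_pair C i p"
    and hi: "i \<in> Hom A B" and hp: "p \<in> Hom B D" and hi': "i' \<in> Hom A' B'" and hp': "p' \<in> Hom B' D'"
    and ha: "a \<in> Hom A A'" and ha': "a' \<in> Hom A' A" and aa: "a' \<cdot> a = idm C A" "a \<cdot> a' = idm C A'"
    and hb: "b \<in> Hom B B'" and hb': "b' \<in> Hom B' B" and bb: "b' \<cdot> b = idm C B" "b \<cdot> b' = idm C B'"
    and hc: "c \<in> Hom D D'" and hc': "c' \<in> Hom D' D" and cc: "c' \<cdot> c = idm C D" "c \<cdot> c' = idm C D'"
    and sq1: "i' \<cdot> a = b \<cdot> i" and sq2: "p' \<cdot> b = c \<cdot> p"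
  shows "is_kernel_cokernel_pair C i' p'"
proof -
  note T = hi hp hi' hp' ha ha' hb hb' hc hc'
  note TT = T[THEN homT(1)] T[THEN homT(2)] T[THEN homT(3)] T[THEN homT(4)] T[THEN homT(5)]
  have obs: "A \<in> Ob C" "B \<in> Ob C" "D \<in> Ob C" "A' \<in> Ob C" "B' \<in> Ob C" "D' \<in> Ob C"
    using TT by (metis dom_ob cod_ob)+
  have K: "p \<cdot> i = zmor C A D" using kcp hi hp unfolding is_kernel_cokernel_pair_def by (simp add: homs_iff)
  have Kk: "\<And>X f. X \<in> Ob C \<Longrightarrow> f \<in> Hom X B \<Longrightarrow> p \<cdot> f = zmor C X D \<Longrightarrow> \<exists>!g. g \<in> Hom X A \<and> i \<cdot> g = f"
    using kcp hi hp unfolding is_kernel_cokernel_pair_def by (simp add: homs_iff)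
  have Kc: "\<And>X f. X \<in> Ob C \<Longrightarrow> f \<in> Hom B X \<Longrightarrow> f \<cdot> i = zmor C A X \<Longrightarrow> \<exists>!g. g \<in> Hom D X \<and> g \<cdot> p = f"
    using kcp hi hp unfolding is_kernel_cokernel_pair_def by (simp add: homs_iff)
  have sq1': "b' \<cdot> i' = i \<cdot> a'"
  proof -
    have "b' \<cdot> i' = b' \<cdot> (i' \<cdot> (a \<cdot> a'))" using aa TT by simp
    also have "\<dots> = b' \<cdot> (b \<cdot> (i \<cdot> a'))" using comp_eq_ext[OF sq1, of a'] TT by simp
    also have "\<dots> = i \<cdot> a'" using bb TT by (simp flip: assoc)
    finally show ?thesis .
  qed
  have sq2': "p \<cdot> b' = c' \<cdot> p'"
  proof -
    have "p \<cdot> b' = c' \<cdot> (c \<cdot> (p \<cdot> b'))" using cc TT by (simp flip: assoc)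
    also have "\<dots> = c' \<cdot> (p' \<cdot> (b \<cdot> b'))" using comp_eq_ext[OF sq2[symmetric], of b'] TT by simp
    also have "\<dots> = c' \<cdot> p'" using bb TT by simp
    finally show ?thesis .
  qed
  have z: "p' \<cdot> i' = zmor C A' D'"
  proof -
    have "p' \<cdot> i' = p' \<cdot> (i' \<cdot> (a \<cdot> a'))" using aa TT by simp
    also have "\<dots> = p' \<cdot> (b \<cdot> (i \<cdot> a'))" using comp_eq_ext[OF sq1, of a'] TT by simp
    also have "\<dots> = c \<cdot> (p \<cdot> (i \<cdot> a'))" using comp_eq_ext[OF sq2, of "i \<cdot> a'"] TT by simp
    also have "\<dots> = c \<cdot> (zmor C A D \<cdot> a')" using K TT by (simp flip: assoc)
    also have "\<dots> = zmor C A' D'" using TT obs by simp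
    finally show ?thesis .
  qed
  show ?thesis unfolding is_kernel_cokernel_pair_def
  proof (intro conjI ballI impI)
    show "i' \<in> Mor C" "p' \<in> Mor C" "cod C i' = dom C p'" using TT by auto
    show "p' \<cdot> i' = zmor C (dom C i') (cod C p')" using z TT by simp
  next
    fix X f assume X: "X \<in> Ob C" and f: "f \<in> Hom X (dom C p')" and pf: "p' \<cdot> f = zmor C X (cod C p')"
    have fT: "f \<in> Mor C" "dom C f = X" "cod C f = B'" using f TT by (auto simp: homs_iff)
    have f0: "b' \<cdot> f \<in> Hom X B" using fT TT by auto
    have "p \<cdot> (b' \<cdot> f) = c' \<cdot> (p' \<cdot> f)" using comp_eq_ext[OF sq2', of f] fT TT by simp
    also have "\<dots> = zmor C X D" using pf fT TT obs X by simp
    finally have u: "\<exists>!g. g \<in> Hom X A \<and> i \<cdot> g = b' \<cdot> f" using Kk[OF X f0] by blast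
    then obtain g0 where g0: "g0 \<in> Hom X A" "i \<cdot> g0 = b' \<cdot> f" by blast
    have g0T: "g0 \<in> Mor C" "dom C g0 = X" "cod C g0 = A" using g0 by (auto simp: homs_iff)
    show "\<exists>!g. g \<in> Hom X (dom C i') \<and> i' \<cdot> g = f"
    proof (rule ex1I[of _ "a \<cdot> g0"])
      have "i' \<cdot> (a \<cdot> g0) = b \<cdot> (i \<cdot> g0)" using comp_eq_ext[OF sq1, of g0] g0T TT by simp
      also have "\<dots> = b \<cdot> (b' \<cdot> f)" using g0 by simp
      also have "\<dots> = f" using bb fT TT by (simp flip: assoc)
      finally show "a \<cdot> g0 \<in> Hom X (dom C i') \<and> i' \<cdot> (a \<cdot> g0) = f" using g0T TT by auto
    next
      fix g assume g: "g \<in> Hom X (dom C i') \<and> i' \<cdot> g = f"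
      have gT: "g \<in> Mor C" "dom C g = X" "cod C g = A'" using g TT by (auto simp: homs_iff)
      have "i \<cdot> (a' \<cdot> g) = b' \<cdot> (i' \<cdot> g)" using comp_eq_ext[OF sq1'[symmetric], of g] gT TT by simp
      also have "\<dots> = b' \<cdot> f" using g by simp
      finally have e: "i \<cdot> (a' \<cdot> g) = b' \<cdot> f" .
      have "a' \<cdot> g \<in> Hom X A" using gT TT by auto
      then have "a' \<cdot> g = g0" using u e g0 by blast
      then have "a \<cdot> (a' \<cdot> g) = a \<cdot> g0" by simp
      then show "g = a \<cdot> g0" using aa gT TT by (simp flip: assoc)
    qed
  next
    fix X f assume X: "X \<in> Ob C" and f: "f \<in> Hom (cod C i') X" and fi: "f \<cdot> i' = zmor C (dom C i') X"
    have fT: "f \<in> Mor C" "dom C f = B'" "cod C f = X" using f TT by (auto simp: homs_iff)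
    have f0: "f \<cdot> b \<in> Hom B X" using fT TT by auto
    have "(f \<cdot> b) \<cdot> i = (f \<cdot> i') \<cdot> a" using sq1 fT TT by simp
    also have "\<dots> = zmor C A X" using fi fT TT obs X by simp
    finally have u: "\<exists>!g. g \<in> Hom D X \<and> g \<cdot> p = f \<cdot> b" using Kc[OF X f0] by blast
    then obtain g0 where g0: "g0 \<in> Hom D X" "g0 \<cdot> p = f \<cdot> b" by blast
    have g0T: "g0 \<in> Mor C" "dom C g0 = D" "cod C g0 = X" using g0 by (auto simp: homs_iff)
    show "\<exists>!g. g \<in> Hom (cod C p') X \<and> g \<cdot> p' = f"
    proof (rule ex1I[of _ "g0 \<cdot> c'"])
      have "(g0 \<cdot> c') \<cdot> p' = g0 \<cdot> (p \<cdot> b')" using sq2' g0T TT by simp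
      also have "\<dots> = (f \<cdot> b) \<cdot> b'" using g0 g0T TT by (simp flip: assoc)
      also have "\<dots> = f" using bb fT TT by simp
      finally show "g0 \<cdot> c' \<in> Hom (cod C p') X \<and> (g0 \<cdot> c') \<cdot> p' = f" using g0T TT by auto
    next
      fix g assume g: "g \<in> Hom (cod C p') X \<and> g \<cdot> p' = f"
      have gT: "g \<in> Mor C" "dom C g = D'" "cod C g = X" using g TT by (auto simp: homs_iff)
      have "(g \<cdot> c) \<cdot> p = (g \<cdot> p') \<cdot> b" using sq2 gT TT by simp
      also have "\<dots> = f \<cdot> b" using g by simp
      finally have e: "(g \<cdot> c) \<cdot> p = f \<cdot> b" .
      have "g \<cdot> c \<in> Hom D X" using gT TT by auto
      then have "g \<cdot> c = g0" using u e g0 by blast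
      then have "(g \<cdot> c) \<cdot> c' = g0 \<cdot> c'" by simp
      then show "g = g0 \<cdot> c'" using cc gT TT by simp
    qed
  qed
qed


lemma confl_transport:
  assumes cf: "(i, p) \<in> confl C"
    and hi: "i \<in> Hom A B" and hp: "p \<in> Hom B D" and hi': "i' \<in> Hom A' B'" and hp': "p' \<in> Hom B' D'"
    and ha: "a \<in> Hom A A'" and ha': "a' \<in> Hom A' A" and aa: "a' \<cdot> a = idm C A" "a \<cdot> a' = idm C A'"
    and hb: "b \<in> Hom B B'" and hb': "b' \<in> Hom B' B" and bb: "b' \<cdot> b = idm C B" "b \<cdot> b' = idm C B'"
    and hc: "c \<in> Hom D D'" and hc': "c' \<in> Hom D' D" and cc: "c' \<cdot> c = idm C D" "c \<cdot> c' = idm C D'"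
    and sq1: "i' \<cdot> a = b \<cdot> i" and sq2: "p' \<cdot> b = c \<cdot> p"
  shows "(i', p') \<in> confl C"
proof (rule iso_closure[OF cf])
  show "is_kernel_cokernel_pair C i' p'"
    by (rule kcp_transport[OF confl_kcp[OF cf] hi hp hi' hp' ha ha' aa hb hb' bb hc hc' cc sq1 sq2])
  show "a \<in> Hom (dom C i) (dom C i')" "b \<in> Hom (cod C i) (cod C i')" "c \<in> Hom (cod C p) (cod C p')"
    using ha hb hc hi hi' hp hp' homT by metis+
  show "is_iso C a" by (rule isoI[OF ha ha' aa])
  show "is_iso C b" by (rule isoI[OF hb hb' bb])
  show "is_iso C c" by (rule isoI[OF hc hc' cc])
qed (fact sq1 sq2)+

lemma zero_unique_into: "isz Z \<Longrightarrow> X \<in> Ob C \<Longrightarrow> \<exists>!f. f \<in> Hom X Z"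
  unfolding is_zero_obj_def by blast

lemma cok_of_id_zero:
  assumes cf: "(idm C X, p) \<in> confl C" and X: "X \<in> Ob C"
  shows "isz (cod C p)" "p \<in> Hom X (cod C p)"
proof -
  have kcp: "is_kernel_cokernel_pair C (idm C X) p" by (rule confl_kcp[OF cf])
  then have pM: "p \<in> Mor C" "dom C p = X" using X unfolding is_kernel_cokernel_pair_def by auto
  show ph: "p \<in> Hom X (cod C p)" using pM by auto
  define W where "W = cod C p"
  have W: "W \<in> Ob C" using pM W_def by simp
  have pz: "p = zmor C X W"
  proof -
    have "p \<cdot> idm C X = zmor C X W" using kcp X pM unfolding is_kernel_cokernel_pair_def W_def by simp
    then show ?thesis using pM by simp
  qed
  have cok: "\<And>Y f. Y \<in> Ob C \<Longrightarrow> f \<in> Hom X Y \<Longrightarrow> f \<cdot> idm C X = zmor C X Y \<Longrightarrow> \<exists>!g. g \<in> Hom W Y \<and> g \<cdot> p = f"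
    using kcp X pM unfolding is_kernel_cokernel_pair_def W_def by simp
  have from_unique: "\<And>Y g g'. Y \<in> Ob C \<Longrightarrow> g \<in> Hom W Y \<Longrightarrow> g' \<in> Hom W Y \<Longrightarrow> g = g'"
  proof -
    fix Y g g' assume Y: "Y \<in> Ob C" and g: "g \<in> Hom W Y" and g': "g' \<in> Hom W Y"
    have u: "\<exists>!g. g \<in> Hom W Y \<and> g \<cdot> p = zmor C X Y" using cok[OF Y zmor_hom[OF X Y]] X Y by simp
    have "g \<cdot> p = zmor C X Y" "g' \<cdot> p = zmor C X Y" using pz g g' X W Y homT by simp_all
    then show "g = g'" using u g g' by blast
  qed
  have idz: "idm C W = zmor C W W" using from_unique[OF W id_hom[OF W] zmor_hom[OF W W]] .
  show "isz (cod C p)" unfolding W_def[symmetric] is_zero_obj_def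
  proof (intro conjI ballI)
    show "W \<in> Ob C" by fact
    fix Y assume Y: "Y \<in> Ob C"
    show "\<exists>!f. f \<in> Hom W Y" using from_unique[OF Y] zmor_hom[OF W Y] by blast
    show "\<exists>!f. f \<in> Hom Y W"
    proof (rule ex1I[of _ "zmor C Y W"])
      show "zmor C Y W \<in> Hom Y W" using zmor_hom[OF Y W] .
      fix f assume f: "f \<in> Hom Y W"
      have "f = idm C W \<cdot> f" using f homT by simp
      also have "\<dots> = zmor C Y W" unfolding idz using f homT W by simp
      finally show "f = zmor C Y W" .
    qed
  qed
qed

lemma ker_of_id_zero:
  assumes cf: "(i, idm C X) \<in> confl C" and X: "X \<in> Ob C"
  shows "isz (dom C i)" "i \<in> Hom (dom C i) X"
proof -
  have kcp: "is_kernel_cokernel_pair C i (idm C X)" by (rule confl_kcp[OF cf])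
  then have iM: "i \<in> Mor C" "cod C i = X" using X unfolding is_kernel_cokernel_pair_def by auto
  show ih: "i \<in> Hom (dom C i) X" using iM by auto
  define W where "W = dom C i"
  have W: "W \<in> Ob C" using iM W_def by simp
  have iz: "i = zmor C W X"
  proof -
    have "idm C X \<cdot> i = zmor C W X" using kcp X iM unfolding is_kernel_cokernel_pair_def W_def by simp
    then show ?thesis using iM by simp
  qed
  have ker: "\<And>Y f. Y \<in> Ob C \<Longrightarrow> f \<in> Hom Y X \<Longrightarrow> idm C X \<cdot> f = zmor C Y X \<Longrightarrow> \<exists>!g. g \<in> Hom Y W \<and> i \<cdot> g = f"
    using kcp X iM unfolding is_kernel_cokernel_pair_def W_def by simp
  have to_unique: "\<And>Y g g'. Y \<in> Ob C \<Longrightarrow> g \<in> Hom Y W \<Longrightarrow> g' \<in> Hom Y W \<Longrightarrow> g = g'"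
  proof -
    fix Y g g' assume Y: "Y \<in> Ob C" and g: "g \<in> Hom Y W" and g': "g' \<in> Hom Y W"
    have u: "\<exists>!g. g \<in> Hom Y W \<and> i \<cdot> g = zmor C Y X" using ker[OF Y zmor_hom[OF Y X]] X Y by simp
    have "i \<cdot> g = zmor C Y X" "i \<cdot> g' = zmor C Y X" using iz g g' X W Y homT by simp_all
    then show "g = g'" using u g g' by blast
  qed
  have idz: "idm C W = zmor C W W" using to_unique[OF W id_hom[OF W] zmor_hom[OF W W]] .
  show "isz (dom C i)" unfolding W_def[symmetric] is_zero_obj_def
  proof (intro conjI ballI)
    show "W \<in> Ob C" by fact
    fix Y assume Y: "Y \<in> Ob C"
    show "\<exists>!f. f \<in> Hom Y W" using to_unique[OF Y] zmor_hom[OF Y W] by blast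
    show "\<exists>!f. f \<in> Hom W Y"
    proof (rule ex1I[of _ "zmor C W Y"])
      show "zmor C W Y \<in> Hom W Y" using zmor_hom[OF W Y] .
      fix f assume f: "f \<in> Hom W Y"
      have "f = f \<cdot> idm C W" using f homT by simp
      also have "\<dots> = zmor C W Y" unfolding idz using f homT W by simp
      finally show "f = zmor C W Y" .
    qed
  qed
qed

lemma E0: "X \<in> Ob C \<Longrightarrow> \<exists>p. (idm C X, p) \<in> confl C"
  and E0op: "X \<in> Ob C \<Longrightarrow> \<exists>i. (i, idm C X) \<in> confl C"
  using EA(3) unfolding adm_mono_def adm_epi_def by blast+

lemma zero_id: "isz Z \<Longrightarrow> idm C Z = zmor C Z Z"
  using eq_from_zero id_hom zmor_hom zero_ob by metis

lemma confl_iso_zero: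
  assumes f: "f \<in> Hom X Y" and g: "g \<in> Hom Y X" and fg: "g \<cdot> f = idm C X" "f \<cdot> g = idm C Y"
    and h: "h \<in> Hom Y Z" and z: "isz Z"
  shows "(f, h) \<in> confl C"
proof -
  have Y: "Y \<in> Ob C" using f homT by blast
  obtain p where cf: "(idm C Y, p) \<in> confl C" using E0[OF Y] by blast
  define W where "W = cod C p"
  have W: "isz W" "p \<in> Hom Y W" using cok_of_id_zero[OF cf Y] W_def by auto
  have WO: "W \<in> Ob C" "Z \<in> Ob C" using W z zero_ob by auto
  show ?thesis
  proof (rule confl_transport[OF cf id_hom[OF Y] W(2) f h g f fg(2) fg(1) id_hom[OF Y] id_hom[OF Y] _ _
        zmor_hom[OF WO] zmor_hom[OF WO(2) WO(1)]])
    show "idm C Y \<cdot> idm C Y = idm C Y" "idm C Y \<cdot> idm C Y = idm C Y" using Y by simp_all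
    show "zmor C Z W \<cdot> zmor C W Z = idm C W" using zero_id[OF W(1)] WO by simp
    show "zmor C W Z \<cdot> zmor C Z W = idm C Z" using zero_id[OF z] WO by simp
    show "f \<cdot> g = idm C Y \<cdot> idm C Y" using fg Y by simp
    show "h \<cdot> idm C Y = zmor C W Z \<cdot> p"
      using eq_to_zero[OF z] h W(2) comp_hom zmor_hom WO id_hom Y by metis
  qed
qed

lemma confl_zero_iso:
  assumes f: "f \<in> Hom Z X" and z: "isz Z" and h: "h \<in> Hom X Y" and h': "h' \<in> Hom Y X"
    and hh: "h' \<cdot> h = idm C X" "h \<cdot> h' = idm C Y"
  shows "(f, h) \<in> confl C"
proof -
  have X: "X \<in> Ob C" using f homT by blast
  obtain i where cf: "(i, idm C X) \<in> confl C" using E0op[OF X] by blast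
  define W where "W = dom C i"
  have W: "isz W" "i \<in> Hom W X" using ker_of_id_zero[OF cf X] W_def by auto
  have WO: "W \<in> Ob C" "Z \<in> Ob C" using W z zero_ob by auto
  show ?thesis
  proof (rule confl_transport[OF cf W(2) id_hom[OF X] f h zmor_hom[OF WO] zmor_hom[OF WO(2) WO(1)] _ _
        id_hom[OF X] id_hom[OF X] _ _ h h' hh])
    show "idm C X \<cdot> idm C X = idm C X" "idm C X \<cdot> idm C X = idm C X" using X by simp_all
    show "zmor C Z W \<cdot> zmor C W Z = idm C W" using zero_id[OF W(1)] WO by simp
    show "zmor C W Z \<cdot> zmor C Z W = idm C Z" using zero_id[OF z] WO by simp
    show "f \<cdot> zmor C W Z = idm C X \<cdot> i"
      using eq_from_zero[OF W(1)] f W(2) comp_hom zmor_hom WO id_hom X by metis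
    show "h \<cdot> idm C X = h \<cdot> idm C X" ..
  qed
qed

lemma confl_zeros: "isz X \<Longrightarrow> isz Y \<Longrightarrow> isz Z \<Longrightarrow> f \<in> Hom X Y \<Longrightarrow> g \<in> Hom Y Z \<Longrightarrow> (f, g) \<in> confl C"
proof -
  assume z: "isz X" "isz Y" "isz Z" and f: "f \<in> Hom X Y" and g: "g \<in> Hom Y Z"
  have O: "X \<in> Ob C" "Y \<in> Ob C" using z zero_ob by auto
  show ?thesis
  proof (rule confl_iso_zero[OF f zmor_hom[OF O(2) O(1)] _ _ g z(3)])
    show "zmor C Y X \<cdot> f = idm C X" using eq_from_zero[OF z(1)] comp_hom[OF f zmor_hom[OF O(2) O(1)]] id_hom[OF O(1)] by metis
    show "f \<cdot> zmor C Y X = idm C Y" using eq_from_zero[OF z(2)] comp_hom[OF zmor_hom[OF O(2) O(1)] f] id_hom[OF O(2)] by metis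
  qed
qed


subsection \<open>Biproducts and split conflations\<close>

definition isbp where "isbp A B S j1 j2 q1 q2 \<longleftrightarrow> j1 \<in> Hom A S \<and> j2 \<in> Hom B S \<and> q1 \<in> Hom S A \<and> q2 \<in> Hom S B \<and>
   q1 \<cdot> j1 = idm C A \<and> q2 \<cdot> j2 = idm C B \<and> q2 \<cdot> j1 = zmor C A B \<and> q1 \<cdot> j2 = zmor C B A \<and>
   j1 \<cdot> q1 \<boxplus> j2 \<cdot> q2 = idm C S"

lemma isbp_swap: "isbp A B S j1 j2 q1 q2 \<Longrightarrow> isbp B A S j2 j1 q2 q1"
  unfolding isbp_def
proof (elim conjE, intro conjI)
  assume h: "j1 \<in> Hom A S" "j2 \<in> Hom B S" "q1 \<in> Hom S A" "q2 \<in> Hom S B" and e: "j1 \<cdot> q1 \<boxplus> j2 \<cdot> q2 = idm C S"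
  have "j2 \<cdot> q2 \<boxplus> j1 \<cdot> q1 = j1 \<cdot> q1 \<boxplus> j2 \<cdot> q2" using h homT by (intro add_comm) auto
  then show "j2 \<cdot> q2 \<boxplus> j1 \<cdot> q1 = idm C S" using e by simp
qed

lemma split_confl:
  assumes bp: "isbp A B S j1 j2 q1 q2"
  shows "(j1, q2) \<in> confl C"
proof -
  have hj1: "j1 \<in> Hom A S" and hj2: "j2 \<in> Hom B S" and hq1: "q1 \<in> Hom S A" and hq2: "q2 \<in> Hom S B"
    and e1: "q1 \<cdot> j1 = idm C A" and e2: "q2 \<cdot> j2 = idm C B" and e3: "q2 \<cdot> j1 = zmor C A B"
    and e4: "q1 \<cdot> j2 = zmor C B A" and e5: "j1 \<cdot> q1 \<boxplus> j2 \<cdot> q2 = idm C S"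
    using bp unfolding isbp_def by auto
  note H = hj1 hj2 hq1 hq2
  note HT = H[THEN homT(1)] H[THEN homT(2)] H[THEN homT(3)] H[THEN homT(4)] H[THEN homT(5)]
  have AO: "A \<in> Ob C" "B \<in> Ob C" "S \<in> Ob C" using HT by auto
  obtain i0 where cf0: "(i0, idm C B) \<in> confl C" using E0op[OF AO(2)] by blast
  define K where "K = dom C i0"
  have K: "isz K" "i0 \<in> Hom K B" using ker_of_id_zero[OF cf0 AO(2)] K_def by auto
  have KO: "K \<in> Ob C" using K zero_ob by auto
  have am0: "adm_mono C i0" using cf0 unfolding adm_mono_def by blast
  obtain i' f' where po: "is_pushout C i0 (zmor C K A) i' f'" and am': "adm_mono C i'"
    using EA(6) am0 zmor_mor[OF KO AO(1)] K homT by (metis zmor_dom KO AO(1))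
  have i'M: "i' \<in> Mor C" "f' \<in> Mor C" "dom C i' = A" "dom C f' = B" "cod C i' = cod C f'"
    "f' \<cdot> i0 = i' \<cdot> zmor C K A"
    using po K KO AO unfolding is_pushout_def by (auto simp: homs_iff)
  define P where "P = cod C f'"
  have PO: "P \<in> Ob C" using i'M P_def by simp
  have hi': "i' \<in> Hom A P" and hf': "f' \<in> Hom B P" using i'M P_def by auto
  have univ: "\<And>X g h. X \<in> Ob C \<Longrightarrow> g \<in> Hom B X \<Longrightarrow> h \<in> Hom A X \<Longrightarrow> g \<cdot> i0 = h \<cdot> zmor C K A \<Longrightarrow>
      \<exists>!u. u \<in> Hom P X \<and> u \<cdot> f' = g \<and> u \<cdot> i' = h"
    using po K KO AO i'M unfolding is_pushout_def P_def by (simp add: homs_iff)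
  obtain p'' where cf: "(i', p'') \<in> confl C" using am' unfolding adm_mono_def by blast
  have kcp: "is_kernel_cokernel_pair C i' p''" by (rule confl_kcp[OF cf])
  define Q where "Q = cod C p''"
  have hp'': "p'' \<in> Hom P Q" using kcp i'M unfolding is_kernel_cokernel_pair_def Q_def P_def by auto
  have QO: "Q \<in> Ob C" using hp'' homT by blast
  have pi: "p'' \<cdot> i' = zmor C A Q" using kcp i'M unfolding is_kernel_cokernel_pair_def Q_def P_def by auto
  have cok: "\<And>X f. X \<in> Ob C \<Longrightarrow> f \<in> Hom P X \<Longrightarrow> f \<cdot> i' = zmor C A X \<Longrightarrow> \<exists>!g. g \<in> Hom Q X \<and> g \<cdot> p'' = f"
    using kcp i'M unfolding is_kernel_cokernel_pair_def Q_def P_def by simp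
  note H2 = hi' hf' hp''
  note HT2 = H2[THEN homT(1)] H2[THEN homT(2)] H2[THEN homT(3)]
  have sqK: "j2 \<cdot> i0 = j1 \<cdot> zmor C K A"
    using eq_from_zero[OF K(1)] comp_hom[OF K(2) hj2] comp_hom[OF zmor_hom[OF KO AO(1)] hj1] by metis
  obtain u where u: "u \<in> Hom P S" "u \<cdot> f' = j2" "u \<cdot> i' = j1" using univ[OF AO(3) hj2 hj1 sqK] by blast
  note uT = u(1)[THEN homT(1)] u(1)[THEN homT(2)] u(1)[THEN homT(3)]
  define v where "v = i' \<cdot> q1 \<boxplus> f' \<cdot> q2"
  have hv: "v \<in> Hom S P" unfolding v_def using HT HT2 by auto
  note vT = hv[THEN homT(1)] hv[THEN homT(2)] hv[THEN homT(3)]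
  have uv: "u \<cdot> v = idm C S"
  proof -
    have "u \<cdot> v = (u \<cdot> i') \<cdot> q1 \<boxplus> (u \<cdot> f') \<cdot> q2" unfolding v_def using HT HT2 uT
      by (simp add: comp_add_left del: assoc) (simp add: assoc)
    also have "\<dots> = idm C S" using u e5 by simp
    finally show ?thesis .
  qed
  have vj1: "v \<cdot> j1 = i'"
  proof -
    have "v \<cdot> j1 = i' \<cdot> (q1 \<cdot> j1) \<boxplus> f' \<cdot> (q2 \<cdot> j1)" unfolding v_def using HT HT2
      by (simp add: comp_add_right del: assoc) (simp add: assoc)
    also have "\<dots> = i'" using e1 e3 HT HT2 AO by simp
    finally show ?thesis .
  qed
  have vj2: "v \<cdot> j2 = f'"
  proof -
    have "v \<cdot> j2 = i' \<cdot> (q1 \<cdot> j2) \<boxplus> f' \<cdot> (q2 \<cdot> j2)" unfolding v_def using HT HT2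
      by (simp add: comp_add_right del: assoc) (simp add: assoc)
    also have "\<dots> = f'" using e2 e4 HT HT2 AO by simp
    finally show ?thesis .
  qed
  have vu: "v \<cdot> u = idm C P"
  proof -
    have sq: "f' \<cdot> i0 = i' \<cdot> zmor C K A" using i'M by simp
    have U: "\<exists>!w. w \<in> Hom P P \<and> w \<cdot> f' = f' \<and> w \<cdot> i' = i'" using univ[OF PO hf' hi' sq] .
    have "v \<cdot> u \<in> Hom P P" using hv u(1) comp_hom by blast
    moreover have "(v \<cdot> u) \<cdot> f' = f'" "(v \<cdot> u) \<cdot> i' = i'" using u vj1 vj2 vT uT HT2 by simp_all
    moreover have "idm C P \<in> Hom P P" "idm C P \<cdot> f' = f'" "idm C P \<cdot> i' = i'" using PO HT2 id_hom by simp_all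
    ultimately show ?thesis using U by blast
  qed
  have q2u: "q2 \<cdot> u \<in> Hom P B" using comp_hom u(1) hq2 by blast
  have "(q2 \<cdot> u) \<cdot> i' = zmor C A B" using u e3 uT HT HT2 by simp
  then obtain c where c: "c \<in> Hom Q B" "c \<cdot> p'' = q2 \<cdot> u" using cok[OF AO(2) q2u] by blast
  define c' where "c' = p'' \<cdot> f'"
  have hc': "c' \<in> Hom B Q" unfolding c'_def using comp_hom hf' hp'' by blast
  note cT = c(1)[THEN homT(1)] c(1)[THEN homT(2)] c(1)[THEN homT(3)]
  have cc1: "c \<cdot> c' = idm C B"
  proof -
    have "c \<cdot> c' = (c \<cdot> p'') \<cdot> f'" unfolding c'_def using cT HT2 by simp
    also have "\<dots> = idm C B" using c u e2 uT HT HT2 by simp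
    finally show ?thesis .
  qed
  have cc2: "c' \<cdot> c = idm C Q"
  proof -
    have pp: "p'' \<cdot> i' = zmor C A Q" by (fact pi)
    have U: "\<exists>!g. g \<in> Hom Q Q \<and> g \<cdot> p'' = p''" using cok[OF QO hp''] pp by simp
    have "p'' = p'' \<cdot> (v \<cdot> u)" using vu HT2 by simp
    also have "\<dots> = (p'' \<cdot> i') \<cdot> (q1 \<cdot> u) \<boxplus> (p'' \<cdot> f') \<cdot> (q2 \<cdot> u)" unfolding v_def using HT HT2 uT
      by (simp add: comp_add_left comp_add_right del: assoc) (simp add: assoc)
    also have "\<dots> = (p'' \<cdot> f') \<cdot> (q2 \<cdot> u)" using pp HT HT2 uT AO QO by simp
    also have "\<dots> = (c' \<cdot> c) \<cdot> p''" unfolding c'_def using c HT2 cT HT uT by simp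
    finally have "(c' \<cdot> c) \<cdot> p'' = p''" by simp
    moreover have "c' \<cdot> c \<in> Hom Q Q" using comp_hom c(1) hc' by blast
    moreover have "idm C Q \<in> Hom Q Q" "idm C Q \<cdot> p'' = p''" using QO HT2 id_hom by simp_all
    ultimately show ?thesis using U by blast
  qed
  show ?thesis
  proof (rule confl_transport[OF cf hi' hp'' hj1 hq2 id_hom[OF AO(1)] id_hom[OF AO(1)] _ _ u(1) hv vu uv c(1) hc' cc2 cc1])
    show "idm C A \<cdot> idm C A = idm C A" "idm C A \<cdot> idm C A = idm C A" using AO by simp_all
    show "j1 \<cdot> idm C A = u \<cdot> i'" using u HT by simp
    show "q2 \<cdot> u = c \<cdot> p''" using c by simp
  qed
qed

definition bp where "bp A B = (SOME t. case t of (S, j1, j2, q1, q2) \<Rightarrow> isbp A B S j1 j2 q1 q2)"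
definition bs where "bs A B = fst (bp A B)"
definition in1 where "in1 A B = fst (snd (bp A B))"
definition in2 where "in2 A B = fst (snd (snd (bp A B)))"
definition pr1 where "pr1 A B = fst (snd (snd (snd (bp A B))))"
definition pr2 where "pr2 A B = snd (snd (snd (snd (bp A B))))"

lemma bp_ok: "A \<in> Ob C \<Longrightarrow> B \<in> Ob C \<Longrightarrow> isbp A B (bs A B) (in1 A B) (in2 A B) (pr1 A B) (pr2 A B)"
proof -
  assume "A \<in> Ob C" "B \<in> Ob C"
  then have "\<exists>S j1 j2 q1 q2. isbp A B S j1 j2 q1 q2"
    using add[unfolded is_additive_def, THEN conjunct2, THEN conjunct2] unfolding isbp_def by blast
  then have "\<exists>t. case t of (S, j1, j2, q1, q2) \<Rightarrow> isbp A B S j1 j2 q1 q2" by auto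
  then have "case bp A B of (S, j1, j2, q1, q2) \<Rightarrow> isbp A B S j1 j2 q1 q2"
    unfolding bp_def by (rule someI_ex)
  then show ?thesis unfolding bs_def in1_def in2_def pr1_def pr2_def by (auto split: prod.splits)
qed

lemma bp_hom: assumes "A \<in> Ob C" "B \<in> Ob C"
  shows "in1 A B \<in> Hom A (bs A B)" "in2 A B \<in> Hom B (bs A B)" "pr1 A B \<in> Hom (bs A B) A" "pr2 A B \<in> Hom (bs A B) B"
proof -
  note h = bp_ok[OF assms, unfolded isbp_def]
  show "in1 A B \<in> Hom A (bs A B)" using h by blast
  show "in2 A B \<in> Hom B (bs A B)" using h by blast
  show "pr1 A B \<in> Hom (bs A B) A" using h by blast
  show "pr2 A B \<in> Hom (bs A B) B" using h by blast
qed

lemma bs_ob[simp]: "A \<in> Ob C \<Longrightarrow> B \<in> Ob C \<Longrightarrow> bs A B \<in> Ob C"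
  using bp_hom(1) homT(5) by blast

lemma bp_simps[simp]: assumes "A \<in> Ob C" "B \<in> Ob C"
  shows "in1 A B \<in> Mor C" "dom C (in1 A B) = A" "cod C (in1 A B) = bs A B"
    "in2 A B \<in> Mor C" "dom C (in2 A B) = B" "cod C (in2 A B) = bs A B"
    "pr1 A B \<in> Mor C" "dom C (pr1 A B) = bs A B" "cod C (pr1 A B) = A"
    "pr2 A B \<in> Mor C" "dom C (pr2 A B) = bs A B" "cod C (pr2 A B) = B"
  using bp_hom[OF assms] unfolding homs_iff by simp_all

lemma bp_eqs[simp]: assumes "A \<in> Ob C" "B \<in> Ob C"
  shows "pr1 A B \<cdot> in1 A B = idm C A" "pr2 A B \<cdot> in2 A B = idm C B"
    "pr2 A B \<cdot> in1 A B = zmor C A B" "pr1 A B \<cdot> in2 A B = zmor C B A"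
    "in1 A B \<cdot> pr1 A B \<boxplus> in2 A B \<cdot> pr2 A B = idm C (bs A B)"
proof -
  note h = bp_ok[OF assms, unfolded isbp_def]
  show "pr1 A B \<cdot> in1 A B = idm C A" using h by blast
  show "pr2 A B \<cdot> in2 A B = idm C B" using h by blast
  show "pr2 A B \<cdot> in1 A B = zmor C A B" using h by blast
  show "pr1 A B \<cdot> in2 A B = zmor C B A" using h by blast
  show "in1 A B \<cdot> pr1 A B \<boxplus> in2 A B \<cdot> pr2 A B = idm C (bs A B)" using h by blast
qed

lemma bp_eqs2[simp]: assumes "A \<in> Ob C" "B \<in> Ob C" "x \<in> Mor C"
  shows "cod C x = A \<Longrightarrow> pr1 A B \<cdot> (in1 A B \<cdot> x) = x" "cod C x = B \<Longrightarrow> pr2 A B \<cdot> (in2 A B \<cdot> x) = x"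
    "cod C x = A \<Longrightarrow> pr2 A B \<cdot> (in1 A B \<cdot> x) = zmor C (dom C x) B"
    "cod C x = B \<Longrightarrow> pr1 A B \<cdot> (in2 A B \<cdot> x) = zmor C (dom C x) A"
  using assms by (simp_all flip: assoc)

lemma split1: "A \<in> Ob C \<Longrightarrow> B \<in> Ob C \<Longrightarrow> (in1 A B, pr2 A B) \<in> confl C"
  by (rule split_confl[OF bp_ok])

lemma split2: "A \<in> Ob C \<Longrightarrow> B \<in> Ob C \<Longrightarrow> (in2 A B, pr1 A B) \<in> confl C"
  by (rule split_confl[OF isbp_swap[OF bp_ok]])

lemma bs_ext_into: assumes "A \<in> Ob C" "B \<in> Ob C" "f \<in> Hom X (bs A B)" "g \<in> Hom X (bs A B)"
  "pr1 A B \<cdot> f = pr1 A B \<cdot> g" "pr2 A B \<cdot> f = pr2 A B \<cdot> g" shows "f = g"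
proof -
  note T = assms(3,4)[THEN homT(1)] assms(3,4)[THEN homT(2)] assms(3,4)[THEN homT(3)]
  have "f = (in1 A B \<cdot> pr1 A B \<boxplus> in2 A B \<cdot> pr2 A B) \<cdot> f" using T assms by simp
  also have "\<dots> = in1 A B \<cdot> (pr1 A B \<cdot> f) \<boxplus> in2 A B \<cdot> (pr2 A B \<cdot> f)" using T assms(1-4)
    by (simp add: comp_add_right del: assoc bp_eqs) (simp add: assoc)
  also have "\<dots> = in1 A B \<cdot> (pr1 A B \<cdot> g) \<boxplus> in2 A B \<cdot> (pr2 A B \<cdot> g)" using assms by simp
  also have "\<dots> = (in1 A B \<cdot> pr1 A B \<boxplus> in2 A B \<cdot> pr2 A B) \<cdot> g" using T assms
    by (simp add: comp_add_right del: assoc bp_eqs) (simp add: assoc)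
  also have "\<dots> = g" using T assms by simp
  finally show ?thesis .
qed

lemma bs_ext_from: assumes "A \<in> Ob C" "B \<in> Ob C" "f \<in> Hom (bs A B) X" "g \<in> Hom (bs A B) X"
  "f \<cdot> in1 A B = g \<cdot> in1 A B" "f \<cdot> in2 A B = g \<cdot> in2 A B" shows "f = g"
proof -
  note T = assms(3,4)[THEN homT(1)] assms(3,4)[THEN homT(2)] assms(3,4)[THEN homT(3)]
  have "f = f \<cdot> (in1 A B \<cdot> pr1 A B \<boxplus> in2 A B \<cdot> pr2 A B)" using T assms by simp
  also have "\<dots> = (f \<cdot> in1 A B) \<cdot> pr1 A B \<boxplus> (f \<cdot> in2 A B) \<cdot> pr2 A B" using T assms(1-4)
    by (simp add: comp_add_left del: assoc bp_eqs) (simp add: assoc)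
  also have "\<dots> = (g \<cdot> in1 A B) \<cdot> pr1 A B \<boxplus> (g \<cdot> in2 A B) \<cdot> pr2 A B" using assms by (simp del: assoc)
  also have "\<dots> = g \<cdot> (in1 A B \<cdot> pr1 A B \<boxplus> in2 A B \<cdot> pr2 A B)" using T assms
    by (simp add: comp_add_left del: assoc bp_eqs) (simp add: assoc)
  also have "\<dots> = g" using T assms by simp
  finally show ?thesis .
qed

end

context xc
begin

lemma add_neg_cancel1[simp]: "f \<in> Mor C \<Longrightarrow> g \<in> Mor C \<Longrightarrow> dom C f = dom C g \<Longrightarrow> cod C f = cod C g \<Longrightarrow> f \<boxplus> (neg f \<boxplus> g) = g"
  by (simp flip: add_assoc)

lemma add_neg_cancel2[simp]: "f \<in> Mor C \<Longrightarrow> g \<in> Mor C \<Longrightarrow> dom C f = dom C g \<Longrightarrow> cod C f = cod C g \<Longrightarrow> neg f \<boxplus> (f \<boxplus> g) = g"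
  by (simp flip: add_assoc)

definition pair where "pair A B f g = in1 A B \<cdot> f \<boxplus> in2 A B \<cdot> g"
definition copair where "copair A B f g = f \<cdot> pr1 A B \<boxplus> g \<cdot> pr2 A B"

lemma pair_simps[simp]:
  assumes "A \<in> Ob C" "B \<in> Ob C" "f \<in> Mor C" "g \<in> Mor C" "cod C f = A" "cod C g = B" "dom C f = dom C g"
  shows "pair A B f g \<in> Mor C" "dom C (pair A B f g) = dom C f" "cod C (pair A B f g) = bs A B"
    "pr1 A B \<cdot> pair A B f g = f" "pr2 A B \<cdot> pair A B f g = g"
  using assms unfolding pair_def by (simp_all add: comp_add_left)

lemma copair_simps[simp]:
  assumes "A \<in> Ob C" "B \<in> Ob C" "f \<in> Mor C" "g \<in> Mor C" "dom C f = A" "dom C g = B" "cod C f = cod C g"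
  shows "copair A B f g \<in> Mor C" "dom C (copair A B f g) = bs A B" "cod C (copair A B f g) = cod C f"
    "copair A B f g \<cdot> in1 A B = f" "copair A B f g \<cdot> in2 A B = g"
  using assms unfolding copair_def by (simp_all add: comp_add_right)

lemma pair_comp[simp]:
  assumes "A \<in> Ob C" "B \<in> Ob C" "f \<in> Mor C" "g \<in> Mor C" "cod C f = A" "cod C g = B" "dom C f = dom C g"
    "h \<in> Mor C" "cod C h = dom C f"
  shows "pair A B f g \<cdot> h = pair A B (f \<cdot> h) (g \<cdot> h)"
  using assms unfolding pair_def by (simp add: comp_add_right)

lemma comp_copair:
  assumes "A \<in> Ob C" "B \<in> Ob C" "f \<in> Mor C" "g \<in> Mor C" "dom C f = A" "dom C g = B" "cod C f = cod C g"
    "h \<in> Mor C" "dom C h = cod C f"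
  shows "h \<cdot> copair A B f g = copair A B (h \<cdot> f) (h \<cdot> g)"
  using assms unfolding copair_def by (simp add: comp_add_left)

lemma copair_pair[simp]:
  assumes "A \<in> Ob C" "B \<in> Ob C" "f \<in> Mor C" "g \<in> Mor C" "dom C f = A" "dom C g = B" "cod C f = cod C g"
    "f' \<in> Mor C" "g' \<in> Mor C" "cod C f' = A" "cod C g' = B" "dom C f' = dom C g'"
  shows "copair A B f g \<cdot> pair A B f' g' = f \<cdot> f' \<boxplus> g \<cdot> g'"
  using assms unfolding copair_def pair_def by (simp add: comp_add_right comp_add_left)

lemma pair_eqI:
  assumes "A \<in> Ob C" "B \<in> Ob C" "x \<in> Hom X (bs A B)" "pr1 A B \<cdot> x = f" "pr2 A B \<cdot> x = g"
  shows "x = pair A B f g"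
proof -
  have T: "x \<in> Mor C" "dom C x = X" "cod C x = bs A B" using assms(3) homT by blast+
  show ?thesis
    by (rule bs_ext_into[OF assms(1,2,3)]) (use T assms in \<open>auto simp flip: assms(4,5)\<close>)
qed

lemma pair_comp_pair_eq:
  assumes "A \<in> Ob C" "B \<in> Ob C" "f \<in> Mor C" "g \<in> Mor C" "cod C f = A" "cod C g = B" "dom C f = dom C g"
     "f' \<in> Mor C" "g' \<in> Mor C" "cod C f' = A" "cod C g' = B" "dom C f' = dom C g'" "dom C f = dom C f'"
     "f = f'" "g = g'"
  shows "pair A B f g = pair A B f' g'"
  using assms by simp

lemma in1_comp: "A \<in> Ob C \<Longrightarrow> B \<in> Ob C \<Longrightarrow> x \<in> Mor C \<Longrightarrow> cod C x = A \<Longrightarrow>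
   in1 A B \<cdot> x = pair A B x (zmor C (dom C x) B)"
  by (rule pair_eqI[of A B _ "dom C x"]) (auto intro!: homI)

lemma comp_pr2: "A \<in> Ob C \<Longrightarrow> B \<in> Ob C \<Longrightarrow> x \<in> Mor C \<Longrightarrow> dom C x = B \<Longrightarrow>
   x \<cdot> pr2 A B = copair A B (zmor C A (cod C x)) x"
  by (rule bs_ext_from[of A B _ "cod C x"]) (auto intro!: homI)

lemma pair_in1: "A \<in> Ob C \<Longrightarrow> B \<in> Ob C \<Longrightarrow> pair A B (idm C A) (zmor C A B) = in1 A B"
  unfolding pair_def by simp

lemma pair_in2: "A \<in> Ob C \<Longrightarrow> B \<in> Ob C \<Longrightarrow> pair A B (zmor C B A) (idm C B) = in2 A B"
  unfolding pair_def by simp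

lemma pair_id: "A \<in> Ob C \<Longrightarrow> B \<in> Ob C \<Longrightarrow> pair A B (pr1 A B) (pr2 A B) = idm C (bs A B)"
  unfolding pair_def by simp

lemma copair_pr1: "A \<in> Ob C \<Longrightarrow> B \<in> Ob C \<Longrightarrow> copair A B (idm C A) (zmor C B A) = pr1 A B"
  unfolding copair_def by simp

lemma copair_pr2: "A \<in> Ob C \<Longrightarrow> B \<in> Ob C \<Longrightarrow> copair A B (zmor C A B) (idm C B) = pr2 A B"
  unfolding copair_def by simp


definition Pm :: "(nat \<Rightarrow> 'o) \<Rightarrow> nat \<Rightarrow> 'o" where "Pm P n = (if n = 0 then Z0 else P (n - 1))"
definition dsh where "dsh P d n = (if n = 0 then zmor C (P 0) Z0 else neg (d (n - 1)))"
definition Cn where "Cn P n = bs (P n) (Pm P n)"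
definition Dc where "Dc P e s d n = pair (P n) (Pm P n)
   (copair (P (Suc n)) (Pm P (Suc n)) (e n) (s n))
   (copair (P (Suc n)) (Pm P (Suc n)) (zmor C (P (Suc n)) (Pm P n)) (dsh P d n))"

lemma Pm_simps[simp]: "Pm P 0 = Z0" "Pm P (Suc n) = P n"
  unfolding Pm_def by auto

definition Fob where "Fob j Q n = (if n = j \<or> n = Suc j then Q else Z0)"
definition Fd where "Fd j Q u n = (if n = j then u else zmor C (Fob j Q (Suc n)) (Fob j Q n))"

lemma acyclicI:
  assumes "\<And>n. dd n \<in> Hom (Q (Suc n)) (Q n)"
    and "\<And>n. E n \<in> Hom (Q (Suc n)) (J n)" "\<And>n. M n \<in> Hom (J n) (Q n)" "\<And>n. dd n = M n \<cdot> E n"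
    "\<And>n. (M (Suc n), E n) \<in> confl C"
    and "isz z" "q \<in> Hom (Q 0) z" "(M 0, q) \<in> confl C"
  shows "acyclic C Q dd"
  unfolding acyclic_def using assms by blast

lemma isz_Z0[simp]: "isz Z0" by (rule zobj_zero)

lemma acyclic_hom: "acyclic C P d \<Longrightarrow> d n \<in> Hom (P (Suc n)) (P n)"
  unfolding acyclic_def by blast

lemma acyclic_ob: "acyclic C P d \<Longrightarrow> P n \<in> Ob C"
  using acyclic_hom homT by blast

lemma acyclic_dd: assumes "acyclic C P d" shows "d n \<cdot> d (Suc n) = zmor C (P (Suc (Suc n))) (P n)"
proof -
  obtain J e m where H: "\<And>n. e n \<in> Hom (P (Suc n)) (J n) \<and> m n \<in> Hom (J n) (P n) \<and>
                    d n = m n \<cdot> e n \<and> (m (Suc n), e n) \<in> confl C"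
    using assms unfolding acyclic_def by blast
  have k: "is_kernel_cokernel_pair C (m (Suc n)) (e n)" using H confl_kcp by blast
  have T: "e n \<in> Hom (P (Suc n)) (J n)" "m n \<in> Hom (J n) (P n)" "e (Suc n) \<in> Hom (P (Suc (Suc n))) (J (Suc n))"
     "m (Suc n) \<in> Hom (J (Suc n)) (P (Suc n))" using H by blast+
  note TT = T[THEN homT(1)] T[THEN homT(2)] T[THEN homT(3)] T[THEN homT(4)] T[THEN homT(5)]
  have z: "e n \<cdot> m (Suc n) = zmor C (J (Suc n)) (J n)" using k TT unfolding is_kernel_cokernel_pair_def by simp
  have "d n \<cdot> d (Suc n) = m n \<cdot> ((e n \<cdot> m (Suc n)) \<cdot> e (Suc n))" using H TT by simp
  also have "\<dots> = zmor C (P (Suc (Suc n))) (P n)" unfolding z using TT by simp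
  finally show ?thesis .
qed

lemma F_acyclic: assumes Q: "Q \<in> Ob C" and u: "u \<in> Hom Q Q" and uu: "u \<cdot> u = idm C Q"
  shows "acyclic C (Fob j Q) (Fd j Q u)"
proof -
  define J where "J n = (if n = j then Q else Z0)" for n
  define E where "E n = (if n = j then u else zmor C (Fob j Q (Suc n)) (J n))" for n
  define M where "M n = (if n = j then idm C Q else zmor C (J n) (Fob j Q n))" for n
  have FdH: "\<And>n. Fd j Q u n \<in> Hom (Fob j Q (Suc n)) (Fob j Q n)"
    unfolding Fd_def Fob_def using u Q by (auto intro!: homI dest: homT)
  have EH: "\<And>n. E n \<in> Hom (Fob j Q (Suc n)) (J n)"
    unfolding E_def J_def Fob_def using u Q by (auto intro!: homI dest: homT)
  have MH: "\<And>n. M n \<in> Hom (J n) (Fob j Q n)"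
    unfolding M_def J_def Fob_def using u Q by (auto intro!: homI dest: homT)
  show ?thesis
  proof (rule acyclicI[where Q="Fob j Q" and dd="Fd j Q u" and J=J and E=E and M=M and z=Z0, OF FdH EH MH])
    fix n
    show "Fd j Q u n = M n \<cdot> E n"
    proof (cases "n = j")
      case True then show ?thesis unfolding Fd_def M_def E_def using u Q by (simp add: homs_iff)
    next
      case False
      have "isz (J n)" unfolding J_def using False by simp
      then show ?thesis using thru_zero[OF _ EH MH] FdH eq_from_zero by (metis (no_types) False Fd_def)
    qed
    show "(M (Suc n), E n) \<in> confl C"
    proof -
      consider (a) "n = j" | (b) "Suc n = j" | (c) "n \<noteq> j" "Suc n \<noteq> j" by blast
      then show ?thesis
      proof cases
        case a
        have e: "M (Suc n) = zmor C Z0 Q" "E n = u" unfolding M_def E_def J_def Fob_def using a by auto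
        show ?thesis unfolding e by (rule confl_zero_iso[OF zmor_hom isz_Z0 u u uu uu]) (use Q in simp_all)
      next
        case b
        have e: "M (Suc n) = idm C Q" "E n = zmor C Q Z0" unfolding M_def E_def J_def Fob_def using b by auto
        show ?thesis unfolding e by (rule confl_iso_zero[OF id_hom id_hom _ _ zmor_hom isz_Z0]) (use Q in simp_all)
      next
        case c
        show ?thesis by (rule confl_zeros[OF _ _ _ MH EH]) (use c in \<open>simp_all add: J_def Fob_def\<close>)
      qed
    qed
  next
    show "zmor C (Fob j Q 0) Z0 \<in> Hom (Fob j Q 0) Z0" using Q by (intro zmor_hom) (simp_all add: Fob_def)
    show "(M 0, zmor C (Fob j Q 0) Z0) \<in> confl C"
    proof (cases "j = 0")
      case True
      have e: "M 0 = idm C Q" "Fob j Q 0 = Q" unfolding M_def Fob_def using True by auto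
      show ?thesis unfolding e by (rule confl_iso_zero[OF id_hom id_hom _ _ zmor_hom isz_Z0]) (use Q in simp_all)
    next
      case False
      show ?thesis by (rule confl_zeros[OF _ _ _ MH zmor_hom]) (use False Q in \<open>simp_all add: J_def Fob_def\<close>)
    qed
  qed simp
qed

lemma shift_acyclic: assumes "acyclic C P d" shows "acyclic C (Pm P) (dsh P d)"
proof -
  obtain J e m z q where H: "\<And>n. e n \<in> Hom (P (Suc n)) (J n) \<and> m n \<in> Hom (J n) (P n) \<and>
                    d n = m n \<cdot> e n \<and> (m (Suc n), e n) \<in> confl C"
    and z: "isz z" and q: "q \<in> Hom (P 0) z" and mq: "(m 0, q) \<in> confl C"
    using assms unfolding acyclic_def by blast
  have PO: "\<And>n. P n \<in> Ob C" using acyclic_ob[OF assms] .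
  have zO: "z \<in> Ob C" using z zero_ob by blast
  define J' where "J' n = (if n = 0 then z else J (n - 1))" for n
  define E' where "E' n = (if n = 0 then q else neg (e (n - 1)))" for n
  define M' where "M' n = (if n = 0 then zmor C z Z0 else m (n - 1))" for n
  have eH: "\<And>n. e n \<in> Hom (P (Suc n)) (J n)" and mH: "\<And>n. m n \<in> Hom (J n) (P n)"
    and dme: "\<And>n. d n = m n \<cdot> e n" and cfe: "\<And>n. (m (Suc n), e n) \<in> confl C" using H by blast+
  have dH: "\<And>n. dsh P d n \<in> Hom (Pm P (Suc n)) (Pm P n)"
  proof -
    fix n show "dsh P d n \<in> Hom (Pm P (Suc n)) (Pm P n)"
    proof (cases n)
      case 0 then show ?thesis unfolding dsh_def by (simp add: zmor_hom PO)
    next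
      case (Suc n')
      have "d n' \<in> Hom (P (Suc n')) (P n')" using acyclic_hom[OF assms] .
      then show ?thesis unfolding dsh_def Pm_def using Suc neg_hom[of "d n'"] by (simp add: homs_iff)
    qed
  qed
  have EH: "\<And>n. E' n \<in> Hom (Pm P (Suc n)) (J' n)"
  proof -
    fix n show "E' n \<in> Hom (Pm P (Suc n)) (J' n)"
    proof (cases n)
      case 0 then show ?thesis unfolding E'_def J'_def using q by simp
    next
      case (Suc n')
      have "e n' \<in> Hom (P (Suc n')) (J n')" by (rule eH)
      then show ?thesis unfolding E'_def J'_def using Suc neg_hom[of "e n'"] by (simp add: homs_iff)
    qed
  qed
  have MH: "\<And>n. M' n \<in> Hom (J' n) (Pm P n)"
  proof -
    fix n show "M' n \<in> Hom (J' n) (Pm P n)"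
    proof (cases n)
      case 0 then show ?thesis unfolding M'_def J'_def using zO by (simp add: zmor_hom)
    next
      case (Suc n')
      then show ?thesis unfolding M'_def J'_def using mH[of n'] by simp
    qed
  qed
  show ?thesis
  proof (rule acyclicI[where Q="Pm P" and dd="dsh P d" and J=J' and E=E' and M=M' and z=Z0, OF dH EH MH])
    fix n
    show "dsh P d n = M' n \<cdot> E' n"
    proof (cases n)
      case 0 then show ?thesis unfolding dsh_def M'_def E'_def using q zO PO by (simp add: homs_iff)
    next
      case (Suc n')
      have T: "e n' \<in> Hom (P (Suc n')) (J n')" "m n' \<in> Hom (J n') (P n')" "d n' = m n' \<cdot> e n'"
        using eH mH dme by blast+
      note TT = T(1,2)[THEN homT(1)] T(1,2)[THEN homT(2)] T(1,2)[THEN homT(3)]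
      show ?thesis unfolding dsh_def M'_def E'_def using Suc TT T(3) by simp
    qed
    show "(M' (Suc n), E' n) \<in> confl C"
    proof (cases n)
      case 0 then show ?thesis unfolding M'_def E'_def using mq by simp
    next
      case (Suc n')
      have T: "e n' \<in> Hom (P (Suc n')) (J n')" "m n \<in> Hom (J n) (P n)" "(m n, e n') \<in> confl C"
        using eH mH cfe Suc by blast+
      have JO: "J n' \<in> Ob C" using T homT by blast
      have ni: "neg (idm C (J n')) \<in> Hom (J n') (J n')" using neg_hom[of "idm C (J n')"] JO by simp
      have nn: "neg (idm C (J n')) \<cdot> neg (idm C (J n')) = idm C (J n')" using JO by simp
      have e: "M' (Suc n) = m n" "E' n = neg (e n')" unfolding M'_def E'_def using Suc by auto
      show ?thesis unfolding e unfolding Suc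
      proof (rule confl_transport[OF T(3)[unfolded Suc] T(2)[unfolded Suc] T(1) T(2)[unfolded Suc] _ id_hom id_hom _ _ id_hom id_hom _ _ ni ni nn nn])
        note TT = T(1,2)[THEN homT(1)] T(1,2)[THEN homT(2)] T(1,2)[THEN homT(3)] T(1,2)[THEN homT(4)] T(1,2)[THEN homT(5)]
        show "neg (e n') \<in> Hom (P (Suc n')) (J n')" using neg_hom[of "e n'"] TT by simp
        show "idm C (J (Suc n')) \<cdot> idm C (J (Suc n')) = idm C (J (Suc n'))" using TT Suc by simp
        show "idm C (J (Suc n')) \<cdot> idm C (J (Suc n')) = idm C (J (Suc n'))" using TT Suc by simp
        show "idm C (P (Suc n')) \<cdot> idm C (P (Suc n')) = idm C (P (Suc n'))" using TT Suc by simp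
        show "idm C (P (Suc n')) \<cdot> idm C (P (Suc n')) = idm C (P (Suc n'))" using TT Suc by simp
        show "m (Suc n') \<cdot> idm C (J (Suc n')) = idm C (P (Suc n')) \<cdot> m (Suc n')" using TT Suc by simp
        show "neg (e n') \<cdot> idm C (P (Suc n')) = neg (idm C (J n')) \<cdot> e n'" using TT by simp
      qed (use T(2)[unfolded Suc, THEN homT(4)] T(2)[unfolded Suc, THEN homT(5)] in simp_all)
    qed
  next
    show "zmor C (Pm P 0) Z0 \<in> Hom (Pm P 0) Z0" by (intro zmor_hom) simp_all
    show "(M' 0, zmor C (Pm P 0) Z0) \<in> confl C"
      by (rule confl_zeros[OF _ _ _ MH zmor_hom]) (use z in \<open>simp_all add: J'_def\<close>)
  qed simp
qed

lemma zero_acyclic: "acyclic C (\<lambda>n. Z0) (\<lambda>n. zmor C Z0 Z0)"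
  by (rule acyclicI[where J="\<lambda>n. Z0" and E="\<lambda>n. zmor C Z0 Z0" and M="\<lambda>n. zmor C Z0 Z0" and z=Z0 and q="zmor C Z0 Z0"])
     (auto intro!: zmor_hom confl_zeros[OF isz_Z0 isz_Z0 isz_Z0])

definition Wob where "Wob P j n = (if n < j then Cn P n else if n = j then Pm P n else Z0)"

end

locale ladder = xc C for C :: "('o,'m) excat" +
  fixes P :: "nat \<Rightarrow> 'o" and d e s :: "nat \<Rightarrow> 'm"
  assumes P_ob[simp]: "P n \<in> Ob C"
    and d_hom: "d n \<in> Hom (P (Suc n)) (P n)"
    and e_hom: "e n \<in> Hom (P (Suc n)) (P n)"
    and s_hom: "s n \<in> Hom (P n) (P n)"
    and ss: "s n \<cdot> s n = idm C (P n)"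
    and sd: "s n \<cdot> d n = e n \<cdot> s (Suc n)"
    and ee: "e n \<cdot> e (Suc n) = zmor C (P (Suc (Suc n))) (P n)"
begin

lemma lad_typ[simp]: "d n \<in> Mor C" "dom C (d n) = P (Suc n)" "cod C (d n) = P n"
  "e n \<in> Mor C" "dom C (e n) = P (Suc n)" "cod C (e n) = P n"
  "s n \<in> Mor C" "dom C (s n) = P n" "cod C (s n) = P n"
  using d_hom e_hom s_hom homT by blast+

lemma Pm_ob[simp]: "Pm P n \<in> Ob C" unfolding Pm_def by simp

lemma Cn_ob[simp]: "Cn P n \<in> Ob C" unfolding Cn_def by simp

lemma dsh_simps[simp]: "dsh P d n \<in> Mor C" "dom C (dsh P d n) = P n" "cod C (dsh P d n) = Pm P n"
  unfolding dsh_def Pm_def by (cases n; simp)+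

definition mu where "mu n = (if n = 0 then zmor C (P 0) Z0 else neg (s (n - 1) \<cdot> e (n - 1)))"

lemma mu_simps[simp]: "mu n \<in> Mor C" "dom C (mu n) = P n" "cod C (mu n) = Pm P n"
  unfolding mu_def Pm_def by (cases n; simp)+

lemma ss2[simp]: "x \<in> Mor C \<Longrightarrow> cod C x = P n \<Longrightarrow> s n \<cdot> (s n \<cdot> x) = x"
  using ss by (simp flip: assoc)

lemma ss1[simp]: "s n \<cdot> s n = idm C (P n)" by (rule ss)

lemma ee1[simp]: "e n \<cdot> e (Suc n) = zmor C (P (Suc (Suc n))) (P n)" by (rule ee)

lemma ee2[simp]: "x \<in> Mor C \<Longrightarrow> cod C x = P (Suc (Suc n)) \<Longrightarrow> e n \<cdot> (e (Suc n) \<cdot> x) = zmor C (dom C x) (P n)"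
  using ee by (simp flip: assoc)

lemma mu_e: "mu n \<cdot> e n = zmor C (P (Suc n)) (Pm P n)"
  unfolding mu_def Pm_def by (cases n) simp_all

lemma es: "e n \<cdot> s (Suc n) = s n \<cdot> d n" using sd by simp

lemma mu_s: "mu n \<cdot> s n = dsh P d n"
proof (cases n)
  case 0 then show ?thesis unfolding mu_def dsh_def by simp
next
  case (Suc m)
  have "mu n \<cdot> s n = neg (s m \<cdot> (e m \<cdot> s (Suc m)))" unfolding mu_def using Suc by simp
  also have "\<dots> = neg (s m \<cdot> (s m \<cdot> d m))" using es by simp
  also have "\<dots> = neg (d m)" by simp
  finally show ?thesis unfolding dsh_def using Suc by simp
qed


lemma Dc_hom: "Dc P e s d n \<in> Hom (Cn P (Suc n)) (Cn P n)"
  unfolding Dc_def Cn_def by (intro homI) simp_all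

lemma Dc_simps[simp]: "Dc P e s d n \<in> Mor C" "dom C (Dc P e s d n) = bs (P (Suc n)) (P n)"
  "cod C (Dc P e s d n) = bs (P n) (Pm P n)"
  using Dc_hom[of n] homT unfolding Cn_def by auto

definition Wd where "Wd j n = (if Suc n < j then Dc P e s d n
   else if Suc n = j then Dc P e s d n \<cdot> in2 (P (Suc n)) (P n) else zmor C (Wob P j (Suc n)) (Wob P j n))"
definition WJ where "WJ j n = (if n < j then P n else Z0)"
definition WM where "WM j n = (if n < j then pair (P n) (Pm P n) (idm C (P n)) (mu n) else zmor C Z0 (Wob P j n))"
definition WE where "WE j n = (if Suc n < j then copair (P (Suc n)) (P n) (e n) (s n)
   else if Suc n = j then s n else zmor C (Wob P j (Suc n)) Z0)"

lemma Wob_ob[simp]: "Wob P j n \<in> Ob C" unfolding Wob_def by simp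

lemma WJ_ob[simp]: "WJ j n \<in> Ob C" unfolding WJ_def by simp

lemma Wd_hom: "Wd j n \<in> Hom (Wob P j (Suc n)) (Wob P j n)"
  unfolding Wd_def Wob_def Cn_def Dc_def by (intro homI) auto

lemma WE_hom: "WE j n \<in> Hom (Wob P j (Suc n)) (WJ j n)"
  unfolding WE_def Wob_def Cn_def WJ_def by (intro homI) auto

lemma WM_hom: "WM j n \<in> Hom (WJ j n) (Wob P j n)"
  unfolding WM_def Wob_def Cn_def WJ_def by (intro homI) auto

lemma W_fact: "Wd j n = WM j n \<cdot> WE j n"
proof -
  consider (a) "Suc n < j" | (b) "Suc n = j" | (c) "j \<le> n" by linarith
  then show ?thesis
  proof cases
    case a
    have "WM j n \<cdot> WE j n = pair (P n) (Pm P n) (idm C (P n)) (mu n) \<cdot> copair (P (Suc n)) (P n) (e n) (s n)"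
      unfolding WM_def WE_def using a by simp
    also have "\<dots> = pair (P n) (Pm P n) (idm C (P n) \<cdot> copair (P (Suc n)) (P n) (e n) (s n))
        (mu n \<cdot> copair (P (Suc n)) (P n) (e n) (s n))" by (rule pair_comp) simp_all
    also have "\<dots> = pair (P n) (Pm P n) (copair (P (Suc n)) (P n) (e n) (s n))
        (copair (P (Suc n)) (P n) (mu n \<cdot> e n) (mu n \<cdot> s n))" by (simp add: comp_copair)
    also have "\<dots> = Dc P e s d n" unfolding Dc_def mu_e mu_s by simp
    finally show ?thesis unfolding Wd_def using a by simp
  next
    case b
    have "WM j n \<cdot> WE j n = pair (P n) (Pm P n) (idm C (P n)) (mu n) \<cdot> s n"
      unfolding WM_def WE_def using b by simp
    also have "\<dots> = pair (P n) (Pm P n) (s n) (dsh P d n)" using mu_s by simp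
    also have "\<dots> = Dc P e s d n \<cdot> in2 (P (Suc n)) (P n)" unfolding Dc_def by simp
    finally show ?thesis unfolding Wd_def using b by simp
  next
    case c
    have z: "isz (Wob P j (Suc n))" unfolding Wob_def using c zobj_zero by simp
    show ?thesis
      by (rule eq_from_zero[OF z Wd_hom comp_hom[OF WE_hom WM_hom]])
  qed
qed

lemma W_confl: "(WM j (Suc n), WE j n) \<in> confl C"
proof -
  consider (a) "Suc n < j" | (b) "Suc n = j" | (c) "j \<le> n" by linarith
  then show ?thesis
  proof cases
    case a
    define A where "A = P (Suc n)"
    define B where "B = P n"
    define m' where "m' = mu (Suc n)"
    have m'e: "m' = neg (s n \<cdot> e n)" unfolding m'_def mu_def by simp
    have mT: "m' \<in> Mor C" "dom C m' = A" "cod C m' = B" unfolding m'_def A_def B_def by simp_all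
    have O: "A \<in> Ob C" "B \<in> Ob C" unfolding A_def B_def by simp_all
    define b where "b = pair A B (pr1 A B) (m' \<cdot> pr1 A B \<boxplus> pr2 A B)"
    define b' where "b' = pair A B (pr1 A B) (neg m' \<cdot> pr1 A B \<boxplus> pr2 A B)"
    have bT: "b \<in> Hom (bs A B) (bs A B)" "b' \<in> Hom (bs A B) (bs A B)"
      unfolding b_def b'_def using mT O by (auto intro!: homI)
    have bb1: "b' \<cdot> b = idm C (bs A B)"
    proof -
      have "b' \<cdot> b = pair A B (pr1 A B \<cdot> b) ((neg m' \<cdot> pr1 A B \<boxplus> pr2 A B) \<cdot> b)"
        unfolding b'_def using mT O bT homT by simp
      also have "\<dots> = pair A B (pr1 A B) (neg m' \<cdot> pr1 A B \<boxplus> (m' \<cdot> pr1 A B \<boxplus> pr2 A B))"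
        unfolding b_def using mT O by (simp add: comp_add_right)
      also have "\<dots> = idm C (bs A B)" using mT O by (simp add: pair_id)
      finally show ?thesis .
    qed
    have bb2: "b \<cdot> b' = idm C (bs A B)"
    proof -
      have "b \<cdot> b' = pair A B (pr1 A B \<cdot> b') ((m' \<cdot> pr1 A B \<boxplus> pr2 A B) \<cdot> b')"
        unfolding b_def using mT O bT homT by simp
      also have "\<dots> = pair A B (pr1 A B) (m' \<cdot> pr1 A B \<boxplus> (neg m' \<cdot> pr1 A B \<boxplus> pr2 A B))"
        unfolding b'_def using mT O by (simp add: comp_add_right)
      also have "\<dots> = idm C (bs A B)" using mT O by (simp add: pair_id)
      finally show ?thesis .
    qed
    have W1: "WM j (Suc n) = pair A B (idm C A) m'"
      unfolding WM_def A_def B_def m'_def using a by simp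
    have W2: "WE j n = copair A B (e n) (s n)"
      unfolding WE_def A_def B_def using a by simp
    have hWM: "pair A B (idm C A) m' \<in> Hom A (bs A B)" using mT O by (auto intro!: homI)
    have hWE: "copair A B (e n) (s n) \<in> Hom (bs A B) B" unfolding A_def B_def by (auto intro!: homI)
    have sq1: "pair A B (idm C A) m' \<cdot> idm C A = b \<cdot> in1 A B"
      unfolding b_def using mT O by (simp add: comp_add_right)
    have sq2: "copair A B (e n) (s n) \<cdot> b = s n \<cdot> pr2 A B"
    proof -
      have "copair A B (e n) (s n) \<cdot> b = e n \<cdot> pr1 A B \<boxplus> s n \<cdot> (m' \<cdot> pr1 A B \<boxplus> pr2 A B)"
        unfolding b_def using mT O unfolding A_def B_def by simp
      also have "\<dots> = e n \<cdot> pr1 A B \<boxplus> (neg (e n \<cdot> pr1 A B) \<boxplus> s n \<cdot> pr2 A B)"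
        unfolding m'e using O unfolding A_def B_def by (simp add: comp_add_left)
      also have "\<dots> = s n \<cdot> pr2 A B" using O unfolding A_def B_def by simp
      finally show ?thesis .
    qed
    show ?thesis unfolding W1 W2
      by (rule confl_transport[OF split1[OF O] bp_hom(1)[OF O] bp_hom(4)[OF O] hWM hWE
          id_hom[OF O(1)] id_hom[OF O(1)] _ _ bT(1) bT(2) bb1 bb2 s_hom[of n, folded B_def] s_hom[of n, folded B_def] ss[of n, folded B_def] ss[of n, folded B_def] sq1 sq2])
        (use O in simp_all)
  next
    case b
    have W1: "WM j (Suc n) = zmor C Z0 (P n)" unfolding WM_def Wob_def using b by (simp flip: b)
    have W2: "WE j n = s n" unfolding WE_def using b by simp
    show ?thesis unfolding W1 W2
      by (rule confl_zero_iso[OF zmor_hom zobj_zero s_hom s_hom ss ss]) simp_all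
  next
    case c
    show ?thesis
      by (rule confl_zeros[OF _ _ _ WM_hom WE_hom]) (use c zobj_zero in \<open>simp_all add: WJ_def Wob_def\<close>)
  qed
qed

lemma W_bot: "(WM j 0, zmor C (Wob P j 0) Z0) \<in> confl C"
proof (cases "j = 0")
  case True
  show ?thesis
    by (rule confl_zeros[OF _ _ _ WM_hom zmor_hom]) (use True zobj_zero in \<open>simp_all add: WJ_def Wob_def\<close>)
next
  case False
  have O: "P 0 \<in> Ob C" "Z0 \<in> Ob C" by simp_all
  have W1: "WM j 0 = pair (P 0) Z0 (idm C (P 0)) (mu 0)" unfolding WM_def using False by simp
  have W2: "Wob P j 0 = bs (P 0) Z0" unfolding Wob_def Cn_def using False by simp
  have h1: "pair (P 0) Z0 (idm C (P 0)) (mu 0) \<in> Hom (P 0) (bs (P 0) Z0)" by (intro homI) simp_all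
  have e2: "pair (P 0) Z0 (idm C (P 0)) (mu 0) \<cdot> pr1 (P 0) Z0 = idm C (bs (P 0) Z0)"
  proof (rule bs_ext_into[OF O])
    show "pair (P 0) Z0 (idm C (P 0)) (mu 0) \<cdot> pr1 (P 0) Z0 \<in> Hom (bs (P 0) Z0) (bs (P 0) Z0)"
      using comp_hom[OF bp_hom(3)[OF O] h1] .
    show "idm C (bs (P 0) Z0) \<in> Hom (bs (P 0) Z0) (bs (P 0) Z0)" using id_hom O by simp
    show "pr1 (P 0) Z0 \<cdot> pair (P 0) Z0 (idm C (P 0)) (mu 0) \<cdot> pr1 (P 0) Z0 = pr1 (P 0) Z0 \<cdot> idm C (bs (P 0) Z0)"
      by (simp flip: assoc)
    show "pr2 (P 0) Z0 \<cdot> pair (P 0) Z0 (idm C (P 0)) (mu 0) \<cdot> pr1 (P 0) Z0 = pr2 (P 0) Z0 \<cdot> idm C (bs (P 0) Z0)"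
      by (rule eq_to_zero[OF zobj_zero]) (intro homI; simp)+
  qed
  show ?thesis unfolding W1 W2
    by (rule confl_iso_zero[OF h1 bp_hom(3)[OF O] _ e2 zmor_hom zobj_zero]) simp_all
qed

theorem W_acyclic: "acyclic C (Wob P j) (Wd j)"
  by (rule acyclicI[OF Wd_hom WE_hom WM_hom W_fact W_confl zobj_zero zmor_hom W_bot]) simp_all


definition incl where "incl j n = (if n < j then idm C (Cn P n) else if n = j then in2 (P n) (Pm P n)
   else zmor C Z0 (Wob P (Suc j) n))"
definition proj where "proj j n = (if n < j then zmor C (Cn P n) Z0 else if n = j then pr1 (P j) (Pm P j)
   else if n = Suc j then idm C (P j) else zmor C Z0 Z0)"


lemma incl_hom: "incl j n \<in> Hom (Wob P j n) (Wob P (Suc j) n)"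
  unfolding incl_def Wob_def Cn_def by (cases "n < j"; cases "n = j") (auto intro!: homI)

lemma proj_hom: "proj j n \<in> Hom (Wob P (Suc j) n) (Fob j (P j) n)"
  unfolding proj_def Wob_def Cn_def Fob_def
  by (cases "n < j"; cases "n = j"; cases "n = Suc j") (auto intro!: homI)

lemma incl_chain: "incl j n \<cdot> Wd j n = Wd (Suc j) n \<cdot> incl j (Suc n)"
proof -
  consider (a) "Suc n < j" | (b) "Suc n = j" | (c) "j \<le> n" by linarith
  then show ?thesis
  proof cases
    case a then show ?thesis unfolding incl_def Wd_def Cn_def by simp
  next
    case b then show ?thesis unfolding incl_def Wd_def Cn_def by (simp add: b[symmetric])
  next
    case c
    have z: "isz (Wob P j (Suc n))" unfolding Wob_def using c by simp
    show ?thesis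
      by (rule eq_from_zero[OF z comp_hom[OF Wd_hom incl_hom] comp_hom[OF incl_hom Wd_hom]])
  qed
qed

lemma proj_chain: "proj j n \<cdot> Wd (Suc j) n = Fd j (P j) (s j) n \<cdot> proj j (Suc n)"
proof -
  have FdH: "\<And>n. Fd j (P j) (s j) n \<in> Hom (Fob j (P j) (Suc n)) (Fob j (P j) n)"
    unfolding Fd_def Fob_def by (intro homI) auto
  consider (a) "n < j" | (b) "n = j" | (c) "Suc j \<le> n" by linarith
  then show ?thesis
  proof cases
    case a
    have z: "isz (Fob j (P j) n)" unfolding Fob_def using a by simp
    show ?thesis
      by (rule eq_to_zero[OF z comp_hom[OF Wd_hom proj_hom] comp_hom[OF proj_hom FdH]])
  next
    case b then show ?thesis unfolding proj_def Wd_def Fd_def Dc_def by simp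
  next
    case c
    have z: "isz (Wob P (Suc j) (Suc n))" unfolding Wob_def using c by simp
    show ?thesis
      by (rule eq_from_zero[OF z comp_hom[OF Wd_hom proj_hom] comp_hom[OF proj_hom FdH]])
  qed
qed

lemma incl_proj_confl: "(incl j n, proj j n) \<in> confl C"
proof -
  consider (a) "n < j" | (b) "n = j" | (c) "n = Suc j" | (d) "Suc j < n" by linarith
  then show ?thesis
  proof cases
    case a
    have e: "incl j n = idm C (Cn P n)" "proj j n = zmor C (Cn P n) Z0" unfolding incl_def proj_def using a by auto
    show ?thesis unfolding e
      by (rule confl_iso_zero[OF id_hom id_hom _ _ zmor_hom]) simp_all
  next
    case b
    have e: "incl j n = in2 (P n) (Pm P n)" "proj j n = pr1 (P n) (Pm P n)" unfolding incl_def proj_def using b by auto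
    show ?thesis unfolding e by (rule split2) simp_all
  next
    case c
    have e: "incl j n = zmor C Z0 (P j)" "proj j n = idm C (P j)" unfolding incl_def proj_def Wob_def using c by auto
    show ?thesis unfolding e
      by (rule confl_zero_iso[OF zmor_hom isz_Z0 id_hom id_hom]) simp_all
  next
    case d
    show ?thesis
      by (rule confl_zeros[OF _ _ _ incl_hom proj_hom]) (use d in \<open>simp_all add: Wob_def Fob_def\<close>)
  qed
qed


definition inc where "inc k n = (if n < Suc (Suc k) then in1 (P n) (Pm P n) else zmor C (P n) (Wob P (Suc (Suc k)) n))"
definition pj where "pj k n = (if n < Suc (Suc k) then pr2 (P n) (Pm P n)
   else if n = Suc (Suc k) then idm C (Pm P n) else zmor C Z0 (Pm P n))"

lemma inc_hom: "inc k n \<in> Hom (P n) (Wob P (Suc (Suc k)) n)"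
  unfolding inc_def Wob_def Cn_def by (intro homI) auto

lemma pj_hom: "pj k n \<in> Hom (Wob P (Suc (Suc k)) n) (Pm P n)"
  unfolding pj_def Wob_def Cn_def by (cases "n < Suc (Suc k)"; cases "n = Suc (Suc k)") (auto intro!: homI)

lemma dsh_hom: "dsh P d n \<in> Hom (Pm P (Suc n)) (Pm P n)" by (intro homI) simp_all

context
  fixes k assumes Pz: "\<And>n. k < n \<Longrightarrow> isz (P n)"
begin

lemma inc_chain: "inc k n \<cdot> e n = Wd (Suc (Suc k)) n \<cdot> inc k (Suc n)"
proof (cases "Suc n < Suc (Suc k)")
  case True
  have "inc k n \<cdot> e n = pair (P n) (Pm P n) (e n) (zmor C (P (Suc n)) (Pm P n))"
    unfolding inc_def using True by (simp add: in1_comp)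
  also have "\<dots> = Dc P e s d n \<cdot> in1 (P (Suc n)) (P n)" unfolding Dc_def by simp
  finally show ?thesis unfolding Wd_def inc_def using True by simp
next
  case False
  have z: "isz (P (Suc n))" using Pz False by simp
  show ?thesis
    by (rule eq_from_zero[OF z comp_hom[OF e_hom inc_hom] comp_hom[OF inc_hom Wd_hom]])
qed

lemma pj_chain: "pj k n \<cdot> Wd (Suc (Suc k)) n = dsh P d n \<cdot> pj k (Suc n)"
proof -
  consider (a) "Suc n < Suc (Suc k)" | (b) "Suc n = Suc (Suc k)" | (c) "Suc (Suc k) < Suc n" by linarith
  then show ?thesis
  proof cases
    case a
    have "pj k n \<cdot> Wd (Suc (Suc k)) n = copair (P (Suc n)) (P n) (zmor C (P (Suc n)) (Pm P n)) (dsh P d n)"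
      unfolding pj_def Wd_def Dc_def using a by simp
    also have "\<dots> = dsh P d n \<cdot> pr2 (P (Suc n)) (P n)" by (simp add: comp_pr2)
    finally show ?thesis unfolding pj_def using a by simp
  next
    case b
    then show ?thesis unfolding pj_def Wd_def Dc_def by simp
  next
    case c
    have z: "isz (Wob P (Suc (Suc k)) (Suc n))" unfolding Wob_def using c by simp
    show ?thesis
      by (rule eq_from_zero[OF z comp_hom[OF Wd_hom pj_hom] comp_hom[OF pj_hom dsh_hom]])
  qed
qed

lemma inc_pj_confl: "(inc k n, pj k n) \<in> confl C"
proof -
  consider (a) "n < Suc (Suc k)" | (b) "n = Suc (Suc k)" | (c) "Suc (Suc k) < n" by linarith
  then show ?thesis
  proof cases
    case a
    then show ?thesis unfolding inc_def pj_def by (simp add: split1)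
  next
    case b
    have e: "inc k n = zmor C (P n) (Pm P n)" "pj k n = idm C (Pm P n)" unfolding inc_def pj_def Wob_def using b by auto
    show ?thesis unfolding e
      by (rule confl_zero_iso[OF zmor_hom _ id_hom id_hom]) (use Pz b in simp_all)
  next
    case c
    have z: "isz (Pm P n)" unfolding Pm_def using c Pz by simp
    show ?thesis
      by (rule confl_zeros[OF _ _ z inc_hom pj_hom]) (use c Pz in \<open>simp_all add: Wob_def\<close>)
  qed
qed

end

end

context xc
begin

lemma K_facts: "0 \<in> K_sub C m" "\<And>a b. a \<in> K_sub C m \<Longrightarrow> b \<in> K_sub C m \<Longrightarrow> a + b \<in> K_sub C m"
  "\<And>a. a \<in> K_sub C m \<Longrightarrow> - a \<in> K_sub C m" "\<And>a b. a \<in> K_sub C m \<Longrightarrow> b \<in> K_sub C m \<Longrightarrow> a - b \<in> K_sub C m"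
  using fa_sub_facts[OF K_sub_subgroup] by blast+

lemma K_sum: "finite I \<Longrightarrow> (\<And>i. i \<in> I \<Longrightarrow> x i \<in> K_sub C m) \<Longrightarrow> sum x I \<in> K_sub C m"
  by (induction I rule: finite_induct) (auto intro: K_facts)

lemma K_conf: "X \<in> binacyc C m \<Longrightarrow> Y \<in> binacyc C m \<Longrightarrow> Z \<in> binacyc C m \<Longrightarrow> bconfl C X Y Z \<Longrightarrow>
   frag_of Y - frag_of X - frag_of Z \<in> K_sub C m"
  unfolding K_sub_def B_rels_def by (rule generate.incl) blast

lemma K_diag: "(P, d, d) \<in> binacyc C m \<Longrightarrow> frag_of (P, d, d) \<in> K_sub C m"
  unfolding K_sub_def diag_rels_def by (rule generate.incl) blast

definition Zc where "Zc = ((\<lambda>n. Z0), (\<lambda>n. zmor C Z0 Z0), (\<lambda>n. zmor C Z0 Z0))"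

lemma Zc_in: "Zc \<in> binacyc C m"
  unfolding Zc_def binacyc_def using zero_acyclic by simp

lemma K_iso:
  assumes X: "(P, d, d') \<in> binacyc C m" and Y: "(Q, e, e') \<in> binacyc C m"
    and f: "\<And>n. f n \<in> Hom (P n) (Q n)" and g: "\<And>n. g n \<in> Hom (Q n) (P n)"
    and fg: "\<And>n. g n \<cdot> f n = idm C (P n)" "\<And>n. f n \<cdot> g n = idm C (Q n)"
    and ch: "\<And>n. f n \<cdot> d n = e n \<cdot> f (Suc n)" "\<And>n. f n \<cdot> d' n = e' n \<cdot> f (Suc n)"
  shows "frag_of (Q, e, e') - frag_of (P, d, d') \<in> K_sub C m"
proof -
  have aY: "acyclic C Q e" "acyclic C Q e'" using Y unfolding binacyc_def by auto
  have QO: "\<And>n. Q n \<in> Ob C" using acyclic_ob[OF aY(1)] .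
  have eh: "\<And>n. e n \<in> Hom (Q (Suc n)) (Q n)" "\<And>n. e' n \<in> Hom (Q (Suc n)) (Q n)"
    using acyclic_hom aY by blast+
  have bc: "bconfl C (P, d, d') (Q, e, e') Zc"
    unfolding bconfl_def
  proof (intro exI conjI allI)
    show "bmor C (P, d, d') (Q, e, e') f" unfolding bmor_def using f ch by simp
    show "bmor C (Q, e, e') Zc (\<lambda>n. zmor C (Q n) Z0)" unfolding bmor_def Zc_def
    proof (simp, intro allI conjI)
      fix n
      show "zmor C (Q n) Z0 \<in> Hom (Q n) Z0" using QO by (intro zmor_hom) simp_all
      show "zmor C (Q n) Z0 \<cdot> e n = zmor C Z0 Z0 \<cdot> zmor C (Q (Suc n)) Z0"
        using eh QO by (simp add: homs_iff)
      show "zmor C (Q n) Z0 \<cdot> e' n = zmor C Z0 Z0 \<cdot> zmor C (Q (Suc n)) Z0"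
        using eh QO by (simp add: homs_iff)
    qed
    fix n
    show "(f n, zmor C (Q n) Z0) \<in> confl C"
      by (rule confl_iso_zero[OF f g fg(1) fg(2) zmor_hom isz_Z0]) (use QO in simp_all)
  qed
  have "frag_of (Q, e, e') - frag_of (P, d, d') - frag_of Zc \<in> K_sub C m"
    by (rule K_conf[OF X Y Zc_in bc])
  moreover have "frag_of Zc \<in> K_sub C m" unfolding Zc_def by (rule K_diag) (use Zc_in[of m] in \<open>simp add: Zc_def\<close>)
  ultimately have "(frag_of (Q, e, e') - frag_of (P, d, d') - frag_of Zc) + frag_of Zc \<in> K_sub C m"
    using K_facts by blast
  then show ?thesis by simp
qed


lemma cone:
  fixes k :: nat
  assumes A: "(P, d, d') \<in> binacyc C k" and B: "(P, e, e') \<in> binacyc C k"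
    and sH: "\<And>n. s n \<in> Hom (P n) (P n)" "\<And>n. s n \<cdot> s n = idm C (P n)" "\<And>n. s n \<cdot> d n = e n \<cdot> s (Suc n)"
    and tH: "\<And>n. t n \<in> Hom (P n) (P n)" "\<And>n. t n \<cdot> t n = idm C (P n)" "\<And>n. t n \<cdot> d' n = e' n \<cdot> t (Suc n)"
  shows "frag_of (P, e, e') + frag_of (Pm P, dsh P d, dsh P d')
     - (\<Sum>j<Suc k. frag_of (Fob j (P j), Fd j (P j) (s j), Fd j (P j) (t j))) \<in> K_sub C (Suc k)"
proof -
  have ac: "acyclic C P d" "acyclic C P d'" "acyclic C P e" "acyclic C P e'"
    using A B unfolding binacyc_def by auto
  have Pz: "\<And>n. k < n \<Longrightarrow> isz (P n)" using A unfolding binacyc_def by auto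
  interpret T: ladder C P d e s
    by unfold_locales (use ac sH in \<open>auto intro: acyclic_ob acyclic_hom acyclic_dd\<close>)
  interpret U: ladder C P d' e' t
    by unfold_locales (use ac tH in \<open>auto intro: acyclic_ob acyclic_hom acyclic_dd\<close>)
  define W where "W j = (Wob P j, T.Wd j, U.Wd j)" for j
  define F where "F j = (Fob j (P j), Fd j (P j) (s j), Fd j (P j) (t j))" for j
  define A1 where "A1 = (Pm P, dsh P d, dsh P d')"
  define K where "K = K_sub C (Suc k)"
  have Win: "\<And>j. j \<le> Suc (Suc k) \<Longrightarrow> W j \<in> binacyc C (Suc k)"
  proof -
    fix j assume j: "j \<le> Suc (Suc k)"
    have "\<forall>n>Suc k. isz (Wob P j n)"
    proof (intro allI impI)
      fix n assume n: "Suc k < n"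
      show "isz (Wob P j n)"
      proof (cases "n = j")
        case True then show ?thesis unfolding Wob_def Pm_def using n j Pz by auto
      next
        case False then show ?thesis unfolding Wob_def using n j by auto
      qed
    qed
    then show "W j \<in> binacyc C (Suc k)" unfolding W_def binacyc_def using T.W_acyclic U.W_acyclic by simp
  qed
  have Fin: "\<And>j. j \<le> Suc k \<Longrightarrow> F j \<in> binacyc C (Suc k)"
  proof -
    fix j assume j: "j \<le> Suc k"
    have "\<forall>n>Suc k. isz (Fob j (P j) n)"
    proof (intro allI impI)
      fix n assume n: "Suc k < n"
      show "isz (Fob j (P j) n)" unfolding Fob_def using n j Pz by auto
    qed
    moreover have "acyclic C (Fob j (P j)) (Fd j (P j) (s j))" by (rule F_acyclic) (use sH in simp_all)
    moreover have "acyclic C (Fob j (P j)) (Fd j (P j) (t j))" by (rule F_acyclic) (use tH in simp_all)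
    ultimately show "F j \<in> binacyc C (Suc k)" unfolding F_def binacyc_def by simp
  qed
  have A1in: "A1 \<in> binacyc C (Suc k)"
  proof -
    have "\<forall>n>Suc k. isz (Pm P n)" unfolding Pm_def using Pz by auto
    then show ?thesis unfolding A1_def binacyc_def using shift_acyclic ac by simp
  qed
  have Bin: "(P, e, e') \<in> binacyc C (Suc k)" using B binacyc_mono[of k "Suc k" C] by auto
  have Wstep: "\<And>j. j \<le> Suc k \<Longrightarrow> frag_of (W (Suc j)) - frag_of (W j) - frag_of (F j) \<in> K"
  proof -
    fix j assume j: "j \<le> Suc k"
    have "bconfl C (W j) (W (Suc j)) (F j)" unfolding bconfl_def W_def F_def
    proof (intro exI conjI allI)
      show "bmor C (Wob P j, T.Wd j, U.Wd j) (Wob P (Suc j), T.Wd (Suc j), U.Wd (Suc j)) (T.incl j)"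
        unfolding bmor_def using T.incl_hom T.incl_chain U.incl_chain by simp
      show "bmor C (Wob P (Suc j), T.Wd (Suc j), U.Wd (Suc j)) (Fob j (P j), Fd j (P j) (s j), Fd j (P j) (t j)) (T.proj j)"
        unfolding bmor_def using T.proj_hom T.proj_chain U.proj_chain by simp
      fix n show "(T.incl j n, T.proj j n) \<in> confl C" by (rule T.incl_proj_confl)
    qed
    then show "frag_of (W (Suc j)) - frag_of (W j) - frag_of (F j) \<in> K"
      unfolding K_def using K_conf Win Fin j by simp
  qed
  have Wsum: "\<And>J. J \<le> Suc (Suc k) \<Longrightarrow> frag_of (W J) - frag_of (W 0) - (\<Sum>j<J. frag_of (F j)) \<in> K"
  proof -
    fix J show "J \<le> Suc (Suc k) \<Longrightarrow> frag_of (W J) - frag_of (W 0) - (\<Sum>j<J. frag_of (F j)) \<in> K"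
    proof (induction J)
      case 0 then show ?case unfolding K_def using K_facts by simp
    next
      case (Suc J)
      have a: "frag_of (W J) - frag_of (W 0) - (\<Sum>j<J. frag_of (F j)) \<in> K" using Suc by simp
      have b: "frag_of (W (Suc J)) - frag_of (W J) - frag_of (F J) \<in> K" using Wstep Suc by simp
      have "(frag_of (W J) - frag_of (W 0) - (\<Sum>j<J. frag_of (F j))) + (frag_of (W (Suc J)) - frag_of (W J) - frag_of (F J)) \<in> K"
        using a b K_facts unfolding K_def by blast
      then show ?case by (simp add: algebra_simps)
    qed
  qed
  have W0: "frag_of (W 0) \<in> K"
  proof -
    have "T.Wd 0 = U.Wd 0" by (rule ext) (simp add: T.Wd_def U.Wd_def)
    then have "W 0 = (Wob P 0, U.Wd 0, U.Wd 0)" unfolding W_def by simp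
    then show ?thesis unfolding K_def using K_diag Win[of 0] by simp
  qed
  have Fl: "frag_of (F (Suc k)) \<in> K"
  proof -
    have "s (Suc k) = t (Suc k)" using eq_from_zero[OF Pz[of "Suc k"] sH(1) tH(1)] by simp
    then have "F (Suc k) = (Fob (Suc k) (P (Suc k)), Fd (Suc k) (P (Suc k)) (t (Suc k)), Fd (Suc k) (P (Suc k)) (t (Suc k)))"
      unfolding F_def by simp
    then show ?thesis unfolding K_def using K_diag Fin[of "Suc k"] by simp
  qed
  have Bc: "frag_of (W (Suc (Suc k))) - frag_of (P, e, e') - frag_of A1 \<in> K"
  proof -
    have "bconfl C (P, e, e') (W (Suc (Suc k))) A1" unfolding bconfl_def W_def A1_def
    proof (intro exI conjI allI)
      show "bmor C (P, e, e') (Wob P (Suc (Suc k)), T.Wd (Suc (Suc k)), U.Wd (Suc (Suc k))) (T.inc k)"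
        unfolding bmor_def using T.inc_hom T.inc_chain[OF Pz] U.inc_chain[OF Pz] by simp
      show "bmor C (Wob P (Suc (Suc k)), T.Wd (Suc (Suc k)), U.Wd (Suc (Suc k))) (Pm P, dsh P d, dsh P d') (T.pj k)"
        unfolding bmor_def using T.pj_hom T.pj_chain[OF Pz] U.pj_chain[OF Pz] by simp
      fix n show "(T.inc k n, T.pj k n) \<in> confl C" by (rule T.inc_pj_confl[OF Pz])
    qed
    then show ?thesis unfolding K_def using K_conf Win[of "Suc (Suc k)"] A1in Bin by simp
  qed
  have S: "(\<Sum>j<Suc (Suc k). frag_of (F j)) = (\<Sum>j<Suc k. frag_of (F j)) + frag_of (F (Suc k))" by simp
  have "(frag_of (W (Suc (Suc k))) - frag_of (W 0) - (\<Sum>j<Suc (Suc k). frag_of (F j)))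
      - (frag_of (W (Suc (Suc k))) - frag_of (P, e, e') - frag_of A1) + frag_of (W 0) + frag_of (F (Suc k)) \<in> K"
    using Wsum[of "Suc (Suc k)"] Bc W0 Fl K_facts unfolding K_def by (meson order.refl)
  then have "frag_of (P, e, e') + frag_of A1 - (\<Sum>j<Suc k. frag_of (F j)) \<in> K"
    unfolding S by (simp add: algebra_simps)
  then show ?thesis unfolding A1_def F_def K_def .
qed


definition Fc where "Fc j Q u v = (Fob j Q, Fd j Q u, Fd j Q v)"

lemma Fc_in: assumes Q: "Q \<in> Ob C" and u: "u \<in> Hom Q Q" "u \<cdot> u = idm C Q" and v: "v \<in> Hom Q Q" "v \<cdot> v = idm C Q"
  and j: "Suc j \<le> m" shows "Fc j Q u v \<in> binacyc C m"
  unfolding Fc_def binacyc_def using F_acyclic[OF Q u] F_acyclic[OF Q v] j by (auto simp: Fob_def)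

lemma Fc_in': assumes Q: "isz Q" and u: "u \<in> Hom Q Q" and v: "v \<in> Hom Q Q"
  and j: "j \<le> m" shows "Fc j Q u v \<in> binacyc C m"
proof -
  have QO: "Q \<in> Ob C" using Q zero_ob by blast
  have uu: "u \<cdot> u = idm C Q" "v \<cdot> v = idm C Q" using eq_from_zero[OF Q] comp_hom u v id_hom QO by metis+
  show ?thesis unfolding Fc_def binacyc_def using F_acyclic[OF QO u uu(1)] F_acyclic[OF QO v uu(2)] j Q
    by (auto simp: Fob_def)
qed

lemma pair2_Fc: "pair2 C X a b = Fc 0 X a b"
  unfolding pair2_def Fc_def Fob_def Fd_def Let_def
  by (auto intro!: ext simp: le_Suc_eq)

lemma shift_rel:
  assumes Q: "Q \<in> Ob C" and u: "u \<in> Hom Q Q" "u \<cdot> u = idm C Q" and v: "v \<in> Hom Q Q" "v \<cdot> v = idm C Q"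
    and j: "1 \<le> j" "j \<le> k"
  shows "frag_of (Fc j Q u v) + frag_of (Fc (j - 1) Q u v) \<in> K_sub C (Suc k)"
proof -
  define i where "i = j - 1"
  have ji: "j = Suc i" unfolding i_def using j by simp
  define X where "X = Fob i Q"
  have XO: "\<And>n. X n \<in> Ob C" unfolding X_def Fob_def using Q by simp
  have uh: "\<And>n. Fd i Q u n \<in> Hom (X (Suc n)) (X n)" and vh: "\<And>n. Fd i Q v n \<in> Hom (X (Suc n)) (X n)"
    using acyclic_hom[OF F_acyclic[OF Q u]] acyclic_hom[OF F_acyclic[OF Q v]] unfolding X_def by blast+
  have Xin: "(X, Fd i Q u, Fd i Q v) \<in> binacyc C k" using Fc_in[OF Q u v, of i k] j ji unfolding Fc_def X_def by simp
  have c: "frag_of (X, Fd i Q u, Fd i Q v) + frag_of (Pm X, dsh X (Fd i Q u), dsh X (Fd i Q v))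
     - (\<Sum>n<Suc k. frag_of (Fob n (X n), Fd n (X n) (idm C (X n)), Fd n (X n) (idm C (X n)))) \<in> K_sub C (Suc k)"
    by (rule cone[OF Xin Xin]) (use XO uh vh in \<open>simp_all add: id_hom homs_iff\<close>)
  have d: "(\<Sum>n<Suc k. frag_of (Fob n (X n), Fd n (X n) (idm C (X n)), Fd n (X n) (idm C (X n)))) \<in> K_sub C (Suc k)"
  proof (rule K_sum)
    fix n assume "n \<in> {..<Suc k}"
    then have "Fc n (X n) (idm C (X n)) (idm C (X n)) \<in> binacyc C (Suc k)"
      by (intro Fc_in) (use XO id_hom in simp_all)
    then show "frag_of (Fob n (X n), Fd n (X n) (idm C (X n)), Fd n (X n) (idm C (X n))) \<in> K_sub C (Suc k)"
      unfolding Fc_def by (rule K_diag)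
  qed simp
  have e: "frag_of (X, Fd i Q u, Fd i Q v) + frag_of (Pm X, dsh X (Fd i Q u), dsh X (Fd i Q v)) \<in> K_sub C (Suc k)"
    using K_facts(2)[OF c d] by simp
  have nu: "neg u \<in> Hom Q Q" "neg u \<cdot> neg u = idm C Q" "neg v \<in> Hom Q Q" "neg v \<cdot> neg v = idm C Q"
    using u v neg_hom[of u] neg_hom[of v] by (auto simp: homs_iff)
  have A1: "(Pm X, dsh X (Fd i Q u), dsh X (Fd i Q v)) = Fc j Q (neg u) (neg v)"
  proof -
    have o: "Pm X = Fob j Q" unfolding X_def Pm_def Fob_def ji by (auto intro!: ext)
    have "\<And>w. w \<in> Hom Q Q \<Longrightarrow> dsh X (Fd i Q w) = Fd j Q (neg w)"
    proof (rule ext)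
      fix w n assume w: "w \<in> Hom Q Q"
      show "dsh X (Fd i Q w) n = Fd j Q (neg w) n"
        unfolding dsh_def X_def Fd_def Fob_def ji using Q by (cases n) auto
    qed
    then show ?thesis unfolding Fc_def o using u v by simp
  qed
  have iso: "frag_of (Fc j Q u v) - frag_of (Fc j Q (neg u) (neg v)) \<in> K_sub C (Suc k)"
  proof -
    define f where "f n = (if n = j then neg (idm C Q) else idm C (Fob j Q n))" for n
    have fh: "\<And>n. f n \<in> Hom (Fob j Q n) (Fob j Q n)"
      unfolding f_def Fob_def using Q neg_hom[of "idm C Q"] by (auto intro: id_hom)
    have ff: "\<And>n. f n \<cdot> f n = idm C (Fob j Q n)"
      unfolding f_def Fob_def using Q by auto
    have ch: "\<And>w n. w \<in> Hom Q Q \<Longrightarrow> f n \<cdot> Fd j Q (neg w) n = Fd j Q w n \<cdot> f (Suc n)"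
    proof -
      fix w n assume w: "w \<in> Hom Q Q"
      note wT = w[THEN homT(1)] w[THEN homT(2)] w[THEN homT(3)]
      show "f n \<cdot> Fd j Q (neg w) n = Fd j Q w n \<cdot> f (Suc n)"
      proof (cases "n = j")
        case True then show ?thesis unfolding f_def Fd_def Fob_def using Q wT by simp
      next
        case False
        show ?thesis
        proof (cases "Suc n = j")
          case True then show ?thesis unfolding f_def Fd_def Fob_def using Q wT False by auto
        next
          case False2: False
          then show ?thesis unfolding f_def Fd_def Fob_def using Q wT False by auto
        qed
      qed
    qed
    show ?thesis unfolding Fc_def
      by (rule K_iso[where P="Fob j Q" and Q="Fob j Q" and d="Fd j Q (neg u)" and d'="Fd j Q (neg v)"
            and e="Fd j Q u" and e'="Fd j Q v", OF _ _ fh fh ff ff ch[OF u(1)] ch[OF v(1)]])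
         (use Fc_in[OF Q nu, of j "Suc k"] Fc_in[OF Q u v, of j "Suc k"] j in \<open>simp_all add: Fc_def\<close>)
  qed
  have "(frag_of (X, Fd i Q u, Fd i Q v) + frag_of (Pm X, dsh X (Fd i Q u), dsh X (Fd i Q v)))
        + (frag_of (Fc j Q u v) - frag_of (Fc j Q (neg u) (neg v))) \<in> K_sub C (Suc k)"
    using K_facts(2)[OF e iso] .
  then show ?thesis unfolding A1 by (simp add: Fc_def X_def i_def algebra_simps)
qed


lemma alt_rel:
  assumes Q: "Q \<in> Ob C" and u: "u \<in> Hom Q Q" "u \<cdot> u = idm C Q" and v: "v \<in> Hom Q Q" "v \<cdot> v = idm C Q"
  shows "j \<le> k \<Longrightarrow> frag_of (Fc j Q u v) - frag_cmul ((-1) ^ j) (frag_of (Fc 0 Q u v)) \<in> K_sub C (Suc k)"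
proof (induction j)
  case 0 then show ?case using K_facts by simp
next
  case (Suc j)
  have a: "frag_of (Fc j Q u v) - frag_cmul ((-1) ^ j) (frag_of (Fc 0 Q u v)) \<in> K_sub C (Suc k)"
    using Suc by simp
  have b: "frag_of (Fc (Suc j) Q u v) + frag_of (Fc j Q u v) \<in> K_sub C (Suc k)"
    using shift_rel[OF Q u v, of "Suc j" k] Suc by simp
  have c: "(frag_of (Fc (Suc j) Q u v) + frag_of (Fc j Q u v)) - (frag_of (Fc j Q u v) - frag_cmul ((-1) ^ j) (frag_of (Fc 0 Q u v)))
     \<in> K_sub C (Suc k)" using K_facts(4)[OF b a] .
  have eq: "frag_cmul ((-1) ^ Suc j) (frag_of (Fc 0 Q u v)) = - frag_cmul ((-1) ^ j) (frag_of (Fc 0 Q u v))"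
    by (simp del: minus_frag_cmul add: minus_frag_cmul[symmetric])
  have eq2: "frag_of (Fc (Suc j) Q u v) - frag_cmul ((-1) ^ Suc j) (frag_of (Fc 0 Q u v)) =
     (frag_of (Fc (Suc j) Q u v) + frag_of (Fc j Q u v)) - (frag_of (Fc j Q u v) - frag_cmul ((-1) ^ j) (frag_of (Fc 0 Q u v)))"
    unfolding eq by (simp del: minus_frag_cmul add: algebra_simps)
  show ?case unfolding eq2 by (rule c)
qed

lemma ladder_main:
  assumes A: "(P, d, d') \<in> binacyc C k" and B: "(P, e, e') \<in> binacyc C k" and k: "1 \<le> k"
    and H: "\<forall>n. is_involution C (P n) (\<sigma> n) \<and> is_involution C (P n) (\<tau> n) \<and>
            \<sigma> n \<cdot> d n = e n \<cdot> \<sigma> (Suc n) \<and> \<tau> n \<cdot> d' n = e' n \<cdot> \<tau> (Suc n)"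
  shows "frag_of (P, e, e') - frag_of (P, d, d')
        - (\<Sum>i\<in>{0..k}. frag_cmul ((-1) ^ i) (frag_of (pair2 C (P i) (\<sigma> i) (\<tau> i)))) \<in> K_sub C (Suc k)"
proof -
  have ac: "acyclic C P d" "acyclic C P d'" using A unfolding binacyc_def by auto
  have PO: "\<And>n. P n \<in> Ob C" using acyclic_ob[OF ac(1)] .
  have dh: "\<And>n. d n \<in> Hom (P (Suc n)) (P n)" "\<And>n. d' n \<in> Hom (P (Suc n)) (P n)"
    using acyclic_hom ac by blast+
  have sH: "\<And>n. \<sigma> n \<in> Hom (P n) (P n)" "\<And>n. \<sigma> n \<cdot> \<sigma> n = idm C (P n)" "\<And>n. \<sigma> n \<cdot> d n = e n \<cdot> \<sigma> (Suc n)"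
    and tH: "\<And>n. \<tau> n \<in> Hom (P n) (P n)" "\<And>n. \<tau> n \<cdot> \<tau> n = idm C (P n)" "\<And>n. \<tau> n \<cdot> d' n = e' n \<cdot> \<tau> (Suc n)"
    using H unfolding is_involution_def by auto
  define A1 where "A1 = frag_of (Pm P, dsh P d, dsh P d')"
  define G where "G j = frag_of (Fc j (P j) (\<sigma> j) (\<tau> j))" for j
  define K where "K = K_sub C (Suc k)"
  have c1: "frag_of (P, e, e') + A1 - (\<Sum>j<Suc k. G j) \<in> K"
    using cone[OF A B sH tH] unfolding A1_def G_def Fc_def K_def .
  have c2: "frag_of (P, d, d') + A1
     - (\<Sum>j<Suc k. frag_of (Fob j (P j), Fd j (P j) (idm C (P j)), Fd j (P j) (idm C (P j)))) \<in> K"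
    unfolding A1_def K_def
    by (rule cone[OF A A]) (use PO dh in \<open>simp_all add: id_hom homs_iff\<close>)
  have c3: "(\<Sum>j<Suc k. frag_of (Fob j (P j), Fd j (P j) (idm C (P j)), Fd j (P j) (idm C (P j)))) \<in> K"
    unfolding K_def
  proof (rule K_sum)
    fix n assume "n \<in> {..<Suc k}"
    then have "Fc n (P n) (idm C (P n)) (idm C (P n)) \<in> binacyc C (Suc k)"
      by (intro Fc_in) (use PO id_hom in simp_all)
    then show "frag_of (Fob n (P n), Fd n (P n) (idm C (P n)), Fd n (P n) (idm C (P n))) \<in> K_sub C (Suc k)"
      unfolding Fc_def by (rule K_diag)
  qed simp
  have c4: "(\<Sum>j<Suc k. G j - frag_cmul ((-1) ^ j) (frag_of (pair2 C (P j) (\<sigma> j) (\<tau> j)))) \<in> K"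
    unfolding K_def
  proof (rule K_sum)
    fix j assume "j \<in> {..<Suc k}"
    then show "G j - frag_cmul ((-1) ^ j) (frag_of (pair2 C (P j) (\<sigma> j) (\<tau> j))) \<in> K_sub C (Suc k)"
      unfolding G_def pair2_Fc using alt_rel[OF PO sH(1,2) tH(1,2), of j k] by simp
  qed simp
  define S1 where "S1 = (\<Sum>j<Suc k. G j)"
  define S2 where "S2 = (\<Sum>j<Suc k. frag_of (Fob j (P j), Fd j (P j) (idm C (P j)), Fd j (P j) (idm C (P j))))"
  define S3 where "S3 = (\<Sum>j<Suc k. frag_cmul ((-1) ^ j) (frag_of (pair2 C (P j) (\<sigma> j) (\<tau> j))))"
  have s4: "(\<Sum>j<Suc k. G j - frag_cmul ((-1) ^ j) (frag_of (pair2 C (P j) (\<sigma> j) (\<tau> j)))) = S1 - S3"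
    unfolding S1_def S3_def by (rule sum_subtractf)
  have h1: "(frag_of (P, e, e') + A1 - S1) - ((frag_of (P, d, d') + A1 - S2) + S2) + (S1 - S3) \<in> K"
    using K_facts(2)[OF K_facts(4)[OF c1[unfolded K_def, folded S1_def] K_facts(2)[OF c2[unfolded K_def, folded S2_def] c3[unfolded K_def, folded S2_def]]] c4[unfolded K_def s4]]
    unfolding K_def .
  have h2: "(frag_of (P, e, e') + A1 - S1) - ((frag_of (P, d, d') + A1 - S2) + S2) + (S1 - S3)
     = frag_of (P, e, e') - frag_of (P, d, d') - S3" by (simp add: algebra_simps)
  have r: "frag_of (P, e, e') - frag_of (P, d, d') - S3 \<in> K" using h1 unfolding h2 .
  have S3e: "S3 = (\<Sum>i\<in>{0..k}. frag_cmul ((-1) ^ i) (frag_of (pair2 C (P i) (\<sigma> i) (\<tau> i))))"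
    unfolding S3_def atLeast0AtMost lessThan_Suc_atMost ..
  show ?thesis using r unfolding K_def S3e .
qed

end

lemma ladder_K': assumes "exact_category C" "1 \<le> k" shows "ladder_rels C k \<subseteq> K_sub C (Suc k)"
proof
  interpret xc C by unfold_locales (fact assms(1))
  fix x assume "x \<in> ladder_rels C k"
  then obtain P d d' e e' \<sigma> \<tau> where x: "x = frag_of (P, e, e') - frag_of (P, d, d')
        - (\<Sum>i\<in>{0..k}. frag_cmul ((-1) ^ i) (frag_of (pair2 C (P i) (\<sigma> i) (\<tau> i))))"
    and A: "(P, d, d') \<in> binacyc C k" and B: "(P, e, e') \<in> binacyc C k"
    and H: "\<forall>n. is_involution C (P n) (\<sigma> n) \<and> is_involution C (P n) (\<tau> n) \<and>
            comp C (\<sigma> n) (d n) = comp C (e n) (\<sigma> (Suc n)) \<and> comp C (\<tau> n) (d' n) = comp C (e' n) (\<tau> (Suc n))"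
    unfolding ladder_rels_def by blast
  show "x \<in> K_sub C (Suc k)" unfolding x by (rule ladder_main[OF A B assms(2) H])
qed

lemma ladder_carrier': assumes "exact_category C" "1 \<le> k" shows "ladder_rels C k \<subseteq> carrier (FA C k)"
proof
  interpret xc C by unfold_locales (fact assms(1))
  fix x assume "x \<in> ladder_rels C k"
  then obtain P d d' e e' \<sigma> \<tau> where x: "x = frag_of (P, e, e') - frag_of (P, d, d')
        - (\<Sum>i\<in>{0..k}. frag_cmul ((-1) ^ i) (frag_of (pair2 C (P i) (\<sigma> i) (\<tau> i))))"
    and A: "(P, d, d') \<in> binacyc C k" and B: "(P, e, e') \<in> binacyc C k"
    and H: "\<forall>n. is_involution C (P n) (\<sigma> n) \<and> is_involution C (P n) (\<tau> n) \<and>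
            comp C (\<sigma> n) (d n) = comp C (e n) (\<sigma> (Suc n)) \<and> comp C (\<tau> n) (d' n) = comp C (e' n) (\<tau> (Suc n))"
    unfolding ladder_rels_def by blast
  have ac: "acyclic C P d" using A unfolding binacyc_def by auto
  have PO: "\<And>n. P n \<in> Ob C" using acyclic_ob[OF ac] .
  have p2: "\<And>i. pair2 C (P i) (\<sigma> i) (\<tau> i) \<in> binacyc C k"
    unfolding pair2_Fc using H assms(2) PO by (intro Fc_in) (auto simp: is_involution_def)
  have c1: "frag_of (P, e, e') \<in> carrier (FA C k)" "frag_of (P, d, d') \<in> carrier (FA C k)"
    using A B by simp_all
  have c2: "(\<Sum>i\<in>{0..k}. frag_cmul ((-1) ^ i) (frag_of (pair2 C (P i) (\<sigma> i) (\<tau> i)))) \<in> carrier (FA C k)"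
  proof (rule sum_closed_free_Abelian_group)
    fix i show "frag_cmul ((-1) ^ i) (frag_of (pair2 C (P i) (\<sigma> i) (\<tau> i))) \<in> carrier (FA C k)"
      using p2[of i] keys_cmul[of "(-1) ^ i" "frag_of (pair2 C (P i) (\<sigma> i) (\<tau> i))"] by auto
  qed
  define a where "a = frag_of (P, e, e')"
  define b where "b = frag_of (P, d, d')"
  define c where "c = (\<Sum>i\<in>{0..k}. frag_cmul ((-1) ^ i) (frag_of (pair2 C (P i) (\<sigma> i) (\<tau> i))))"
  have "Poly_Mapping.keys (a - b - c) \<subseteq> Poly_Mapping.keys (a - b) \<union> Poly_Mapping.keys c" by (rule keys_diff)
  also have "\<dots> \<subseteq> Poly_Mapping.keys a \<union> Poly_Mapping.keys b \<union> Poly_Mapping.keys c"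
    using keys_diff[of a b] by blast
  also have "\<dots> \<subseteq> binacyc C k" using c1 c2 unfolding a_def b_def c_def by simp
  finally show "x \<in> carrier (FA C k)" unfolding x a_def b_def c_def by simp
qed

lemma L_sub_subgroup: "exact_category C \<Longrightarrow> 1 \<le> k \<Longrightarrow> subgroup (L_sub C k) (FA C k)"
  unfolding L_sub_def by (rule gen_sub_carrier) (use B_rels_carrier diag_rels_carrier ladder_carrier' in blast)

lemma generate_mono': "A \<subseteq> B \<Longrightarrow> generate G A \<subseteq> generate G B"
proof
  fix x assume AB: "A \<subseteq> B" and xA: "x \<in> generate G A"
  from xA show "x \<in> generate G B"
    by (induction x rule: generate.induct) (use AB in \<open>auto intro: generate.intros\<close>)
qed

lemma K_sub_L_sub: "K_sub C k \<subseteq> L_sub C k"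
  unfolding K_sub_def L_sub_def by (rule generate_mono') auto

lemma generate_in_sub:
  assumes "A \<subseteq> carrier (free_Abelian_group S)" "subgroup H (free_Abelian_group T)" "A \<subseteq> H"
  shows "generate (free_Abelian_group S) A \<subseteq> H"
proof
  note F = fa_sub_facts[OF assms(2)]
  fix x assume "x \<in> generate (free_Abelian_group S) A"
  then show "x \<in> H"
  proof induction
    case one then show ?case using F by simp
  next
    case (incl h) then show ?case using assms by blast
  next
    case (inv h)
    then have "h \<in> carrier (free_Abelian_group S)" using assms(1) by blast
    then have "Poly_Mapping.keys h \<subseteq> S" by simp
    then show ?case using inv F(3)[of h] assms(3) by auto
  next
    case (eng h1 h2) then show ?case using F(2) by simp
  qed
qed

lemma L_sub_K_sub: "exact_category C \<Longrightarrow> 1 \<le> k \<Longrightarrow> L_sub C k \<subseteq> K_sub C (Suc k)"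
  unfolding L_sub_def
proof (rule generate_in_sub[OF _ K_sub_subgroup])
  assume "exact_category C" "1 \<le> k"
  show "B_rels C k \<union> diag_rels C k \<union> ladder_rels C k \<subseteq> carrier (FA C k)"
    using B_rels_carrier diag_rels_carrier ladder_carrier'[OF \<open>exact_category C\<close> \<open>1 \<le> k\<close>] by blast
  have "B_rels C (Suc k) \<union> diag_rels C (Suc k) \<subseteq> K_sub C (Suc k)"
    unfolding K_sub_def by (auto intro: generate.incl)
  then show "B_rels C k \<union> diag_rels C k \<union> ladder_rels C k \<subseteq> K_sub C (Suc k)"
    using B_rels_mono diag_rels_mono ladder_K'[OF \<open>exact_category C\<close> \<open>1 \<le> k\<close>] by blast
qed

lemma hom_FA_restrict:
  assumes "f \<in> hom (free_Abelian_group T) H" "S \<subseteq> T"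
  shows "f \<in> hom (free_Abelian_group S) H"
  using assms unfolding hom_def by (auto simp: Pi_iff)

lemma hom_agree_free:
  assumes f: "f \<in> hom (free_Abelian_group S) H" and g: "g \<in> hom (free_Abelian_group S) H"
    and H: "group H" and agree: "\<And>s. s \<in> S \<Longrightarrow> f (frag_of s) = g (frag_of s)"
    and x: "Poly_Mapping.keys x \<subseteq> S"
  shows "f x = g x"
proof -
  interpret F: group_hom "free_Abelian_group S" H f using f H by (simp add: group_hom_def group_hom_axioms_def)
  interpret G: group_hom "free_Abelian_group S" H g using g H by (simp add: group_hom_def group_hom_axioms_def)
  show ?thesis
  proof (rule free_Abelian_group_induct[where P="\<lambda>x. f x = g x", OF x])
    show "f 0 = g 0" using F.hom_one G.hom_one by simp
  next
    fix x y assume 2: "Poly_Mapping.keys x \<subseteq> S" "Poly_Mapping.keys y \<subseteq> S" "f x = g x" "f y = g y"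
    have e: "x - y = x \<otimes>\<^bsub>free_Abelian_group S\<^esub> inv\<^bsub>free_Abelian_group S\<^esub> y"
      using 2 by simp
    have cx: "x \<in> carrier (free_Abelian_group S)" "y \<in> carrier (free_Abelian_group S)" using 2 by auto
    have iy: "inv\<^bsub>free_Abelian_group S\<^esub> y \<in> carrier (free_Abelian_group S)"
      by (rule group.inv_closed[OF group_free_Abelian_group cx(2)])
    show "f (x - y) = g (x - y)" unfolding e F.hom_mult[OF cx(1) iy] G.hom_mult[OF cx(1) iy]
      F.hom_inv[OF cx(2)] G.hom_inv[OF cx(2)] using 2 by simp
  next
    fix a assume "a \<in> S" then show "f (frag_of a) = g (frag_of a)" using agree by simp
  qed
qed

theorem lemma3p3:
  fixes N :: "('o, 'm) excat" and k :: nat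
  assumes "exact_category N" and "k \<ge> 1"
  shows "\<exists>\<phi> \<in> hom (L1 N k) (K1 N (Suc k)).
           (\<forall>X \<in> binacyc N k. \<phi> (Lcls N k X) = Kcls N (Suc k) X) \<and>
           (\<exists>\<pi> \<in> hom (K1 N (Suc k)) (L1 N (Suc k)).
              \<pi> ` carrier (K1 N (Suc k)) = carrier (L1 N (Suc k)) \<and>
              (\<forall>X \<in> binacyc N (Suc k). \<pi> (Kcls N (Suc k) X) = Lcls N (Suc k) X) \<and>
              (\<forall>i \<in> hom (L1 N k) (L1 N (Suc k)).
                 (\<forall>X \<in> binacyc N k. i (Lcls N k X) = Lcls N (Suc k) X) \<longrightarrow>
                 (\<forall>x \<in> carrier (L1 N k). i x = \<pi> (\<phi> x))))"
proof -
  define G where "G = FA N k"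
  define G' where "G' = FA N (Suc k)"
  define K' where "K' = K_sub N (Suc k)"
  define L where "L = L_sub N k"
  define L' where "L' = L_sub N (Suc k)"
  have sk: "1 \<le> Suc k" by simp
  have SS: "binacyc N k \<subseteq> binacyc N (Suc k)" by (rule binacyc_mono) simp
  have subK': "subgroup K' G'" unfolding K'_def G'_def by (rule K_sub_subgroup)
  have subL: "subgroup L G" unfolding L_def G_def by (rule L_sub_subgroup[OF assms])
  have subL': "subgroup L' G'" unfolding L'_def G'_def by (rule L_sub_subgroup[OF assms(1) sk])
  have LK: "L \<subseteq> K'" unfolding L_def K'_def by (rule L_sub_K_sub[OF assms])
  have KL: "K' \<subseteq> L'" unfolding K'_def L'_def by (rule K_sub_L_sub)
  have nK': "normal K' G'" unfolding G'_def
    by (rule comm_group.subgroup_imp_normal[OF abelian_free_Abelian_group]) (use subK' G'_def in simp)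
  have nL: "normal L G" unfolding G_def
    by (rule comm_group.subgroup_imp_normal[OF abelian_free_Abelian_group]) (use subL G_def in simp)
  have nL': "normal L' G'" unfolding G'_def
    by (rule comm_group.subgroup_imp_normal[OF abelian_free_Abelian_group]) (use subL' G'_def in simp)
  have hK': "r_coset G' K' \<in> hom G' (G' Mod K')" by (rule normal.r_coset_hom_Mod[OF nK'])
  have hL': "r_coset G' L' \<in> hom G' (G' Mod L')" by (rule normal.r_coset_hom_Mod[OF nL'])
  have hL: "r_coset G L \<in> hom G (G Mod L)" by (rule normal.r_coset_hom_Mod[OF nL])
  have hK'r: "r_coset G' K' \<in> hom G (G' Mod K')"
    using hom_FA_restrict[OF hK'[unfolded G'_def] SS] G_def G'_def by simp
  have hL'r: "r_coset G' L' \<in> hom G (G' Mod L')"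
    using hom_FA_restrict[OF hL'[unfolded G'_def] SS] G_def G'_def by simp
  obtain \<phi> where phi: "\<phi> \<in> hom (G Mod L) (G' Mod K')" "\<And>x. x \<in> carrier G \<Longrightarrow> \<phi> (r_coset G L x) = r_coset G' K' x"
  proof (rule FactGroup_universal[OF hK'r nL])
    fix x y assume "x \<in> carrier G" "y \<in> carrier G" "r_coset G L x = r_coset G L y"
    then have "x - y \<in> L" using fa_coset_eq[OF subL[unfolded G_def]] G_def by simp
    then have "x - y \<in> K'" using LK by blast
    then show "r_coset G' K' x = r_coset G' K' y" using fa_coset_eq[OF subK'[unfolded G'_def]] G'_def by simp
  qed blast
  obtain \<pi> where pi: "\<pi> \<in> hom (G' Mod K') (G' Mod L')" "\<And>x. x \<in> carrier G' \<Longrightarrow> \<pi> (r_coset G' K' x) = r_coset G' L' x"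
  proof (rule FactGroup_universal[OF hL' nK'])
    fix x y assume "x \<in> carrier G'" "y \<in> carrier G'" "r_coset G' K' x = r_coset G' K' y"
    then have "x - y \<in> K'" using fa_coset_eq[OF subK'[unfolded G'_def]] G'_def by simp
    then have "x - y \<in> L'" using KL by blast
    then show "r_coset G' L' x = r_coset G' L' y" using fa_coset_eq[OF subL'[unfolded G'_def]] G'_def by simp
  qed blast
  have carrG: "carrier G \<subseteq> carrier G'" using SS G_def G'_def by auto
  have L1e: "L1 N k = G Mod L" "L1 N (Suc k) = G' Mod L'" "K1 N (Suc k) = G' Mod K'"
    by (simp_all add: L1_def K1_def G_def G'_def L_def L'_def K'_def)
  show ?thesis
  proof (intro bexI conjI ballI impI)
    show "\<phi> \<in> hom (L1 N k) (K1 N (Suc k))" using phi L1e by simp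
    show "\<pi> \<in> hom (K1 N (Suc k)) (L1 N (Suc k))" using pi L1e by simp
    fix X assume "X \<in> binacyc N k"
    then show "\<phi> (Lcls N k X) = Kcls N (Suc k) X"
      using phi(2)[of "frag_of X"] by (simp add: Lcls_def Kcls_def G_def G'_def L_def K'_def)
  next
    fix X assume "X \<in> binacyc N (Suc k)"
    then show "\<pi> (Kcls N (Suc k) X) = Lcls N (Suc k) X"
      using pi(2)[of "frag_of X"] by (simp add: Lcls_def Kcls_def G'_def L'_def K'_def)
  next
    show "\<pi> ` carrier (K1 N (Suc k)) = carrier (L1 N (Suc k))"
      unfolding L1e carrier_FactGroup using pi(2) by (auto simp: image_iff)
  next
    fix i x assume i: "i \<in> hom (L1 N k) (L1 N (Suc k))"
      and iX: "\<forall>X \<in> binacyc N k. i (Lcls N k X) = Lcls N (Suc k) X"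
      and x: "x \<in> carrier (L1 N k)"
    obtain a where a: "a \<in> carrier G" "x = r_coset G L a" using x L1e by (auto simp: carrier_FactGroup)
    have h1: "i \<circ> r_coset G L \<in> hom G (G' Mod L')"
      using hom_compose[OF hL i[unfolded L1e]] .
    have grp: "group (G' Mod L')" by (rule normal.factorgroup_is_group[OF nL'])
    have eq: "i (r_coset G L a) = r_coset G' L' a"
      using hom_agree_free[OF h1[unfolded G_def] hL'r[unfolded G_def] grp, of a] iX a
      by (simp add: Lcls_def G_def G'_def L_def L'_def)
    have "\<pi> (\<phi> x) = r_coset G' L' a" using a phi(2) pi(2) carrG by auto
    then show "i x = \<pi> (\<phi> x)" using eq a by simp
  qed
qed

end
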